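(* Let $\mathcal{C}$ be a $((j,K,d))$ spin code and $n=2j$. Then the $n$-qubit code $\mathscr{D}(\mathcal{C})$ satisfies the Knill–Laflamme conditions for all spherical Pauli errors $\mathrm{Sph}(E)$ with $E$ an $n$-qubit Pauli operator of weight $<d$: for all $|u\rangle,|v\rangle\in\mathcal{C}$, $\langle u|\mathscr{D}^\dagger\mathrm{Sph}(E)\mathscr{D}|v\rangle=c_E\langle u|v\rangle$ with $c_E$ independent of $u,v$.
   Context: Spin $j$: the irrep $\mathcal{H}_j$ of $\mathrm{SU}(2)$ with basis $|j,m\rangle$. Spherical tensors $T^k_q=\sqrt{\tfrac{2k+1}{2j+1}}\sum_m C^{j\,m+q}_{k\,q,\,j\,m}|j,m+q\rangle\langle j,m|$. A $((j,K,d))$ spin code is a $K$-dimensional subspace of $\mathcal{H}_j$ with $\langle\phi|T^k_q|\psi\rangle=c_{k,q}\langle\phi|\psi\rangle$ for all codewords and all $k<d$, $|q|\le k$. The Dicke mapping $\mathscr{D}$ is the linear isometry $|j,m\rangle\mapsto|D^{2j}_{j-m}\rangle$, $|D^n_w\rangle$ the normalized uniform superposition of weight-$w$ computational basis states. For an $n$-qubit operator $A$ and permutation $\sigma\in S_n$ let $P_\sigma$ be the matrix permuting tensor factors; $\mathrm{Sym}(A)=\tfrac{1}{n!}\sum_{\sigma\in S_n}P_\sigma^\dagger AP_\sigma$. A Pauli $E$ of weight $w$ is uniquely a product $E=E_1\cdots E_w$ of weight-one Paulis (on distinct qubits), and $\mathrm{Sph}(E)=\mathrm{Sym}(E_1)\cdots\mathrm{Sym}(E_w)$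 (with $\mathrm{Sph}(I)=I$). *)

theory Defs
  imports "Jordan_Normal_Form.VS_Connect" "Jordan_Normal_Form.Schur_Decomposition"
          "HOL-Combinatorics.Permutations"
begin

section \<open>Clebsch-Gordan coefficients (Condon-Shortley convention, Racah formula)\<close>

text \<open>All angular momenta and projections are passed DOUBLED (as integers), so that
  half-integer values are representable.  cg tJ tM tj1 tm1 tj2 tm2 is the coefficient
  C^{J M}_{j1 m1, j2 m2} = <j1 m1; j2 m2 | J M> with tJ = 2J, tM = 2M, etc.
  It is zero unless all selection rules hold.\<close>

definition inv_fact_int :: "int \<Rightarrow> real" where
  "inv_fact_int x = (if x < 0 then 0 else 1 / fact (nat x))"

definition fact_int :: "int \<Rightarrow> real" where
  "fact_int x = fact (nat x)"

definition cg_valid :: "int \<Rightarrow> int \<Rightarrow> int \<Rightarrow> int \<Rightarrow> int \<Rightarrow> int \<Rightarrow> bool" where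
  "cg_valid tJ tM tj1 tm1 tj2 tm2 \<longleftrightarrow>
     tM = tm1 + tm2 \<and> 0 \<le> tj1 \<and> 0 \<le> tj2 \<and> 0 \<le> tJ \<and>
     \<bar>tm1\<bar> \<le> tj1 \<and> \<bar>tm2\<bar> \<le> tj2 \<and> \<bar>tM\<bar> \<le> tJ \<and>
     even (tj1 + tm1) \<and> even (tj2 + tm2) \<and> even (tJ + tM) \<and>
     \<bar>tj1 - tj2\<bar> \<le> tJ \<and> tJ \<le> tj1 + tj2 \<and> even (tj1 + tj2 + tJ)"

definition cg :: "int \<Rightarrow> int \<Rightarrow> int \<Rightarrow> int \<Rightarrow> int \<Rightarrow> int \<Rightarrow> real" where
  "cg tJ tM tj1 tm1 tj2 tm2 =
    (if cg_valid tJ tM tj1 tm1 tj2 tm2 then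
       sqrt (real_of_int (tJ + 1) * fact_int ((tJ + tj1 - tj2) div 2) * fact_int ((tJ - tj1 + tj2) div 2)
             * fact_int ((tj1 + tj2 - tJ) div 2) / fact_int ((tj1 + tj2 + tJ) div 2 + 1))
     * sqrt (fact_int ((tJ + tM) div 2) * fact_int ((tJ - tM) div 2)
             * fact_int ((tj1 - tm1) div 2) * fact_int ((tj1 + tm1) div 2)
             * fact_int ((tj2 - tm2) div 2) * fact_int ((tj2 + tm2) div 2))
     * (\<Sum>k\<in>{0..nat ((tj1 + tj2 - tJ) div 2)}.
          (-1) ^ k * inv_fact_int (int k)
          * inv_fact_int ((tj1 + tj2 - tJ) div 2 - int k)
          * inv_fact_int ((tj1 - tm1) div 2 - int k)
          * inv_fact_int ((tj2 + tm2) div 2 - int k)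
          * inv_fact_int ((tJ - tj2 + tm1) div 2 + int k)
          * inv_fact_int ((tJ - tj1 - tm2) div 2 + int k))
     else 0)"

section \<open>Spin j = n/2: the space H_j = C^(n+1)\<close>

text \<open>Basis vector with index a (0 \<le> a \<le> n) is |j, m> with m = j - a (so doubled m is n - 2a).\<close>

definition braket :: "complex vec \<Rightarrow> complex vec \<Rightarrow> complex" where
  "braket u v = (\<Sum>i<dim_vec u. cnj (u $ i) * v $ i)"

text \<open>Spherical tensor T^k_q on spin j = n/2.  Entry (b,a) is <j,m'|T^k_q|j,m>
  with m = j - a, m' = j - b, and it equals sqrt((2k+1)/(2j+1)) C^{j m'}_{k q, j m}
  (which vanishes unless m' = m + q).\<close>
definition sph_tensor :: "nat \<Rightarrow> nat \<Rightarrow> int \<Rightarrow> complex mat" where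
  "sph_tensor n k q = mat (n + 1) (n + 1) (\<lambda>(b, a).
      complex_of_real (sqrt ((2 * real k + 1) / (real n + 1))
        * cg (int n) (int n - 2 * int b) (2 * int k) (2 * q) (int n) (int n - 2 * int a)))"

definition spin_code :: "nat \<Rightarrow> nat \<Rightarrow> nat \<Rightarrow> complex vec set \<Rightarrow> bool" where
  "spin_code n K d C \<longleftrightarrow>
     VectorSpace.subspace class_ring C (module_vec TYPE(complex) (n + 1)) \<and>
     vectorspace.dim class_ring ((module_vec TYPE(complex) (n + 1))\<lparr>carrier := C\<rparr>) = K \<and>
     (\<forall>k < d. \<forall>q::int. \<bar>q\<bar> \<le> int k \<longrightarrow>
        (\<exists>c. \<forall>\<phi>\<in>C. \<forall>\<psi>\<in>C. braket \<phi> (sph_tensor n k q *\<^sub>v \<psi>) = c * braket \<phi> \<psi>))"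

section \<open>n qubits: C^(2^n), computational basis index x < 2^n, qubit i holds bit i of x\<close>

definition hamming_weight :: "nat \<Rightarrow> nat \<Rightarrow> nat" where
  "hamming_weight n x = card {i. i < n \<and> bit x i}"

definition dicke_vec :: "nat \<Rightarrow> nat \<Rightarrow> complex vec" where
  "dicke_vec n w = vec (2 ^ n) (\<lambda>x. if hamming_weight n x = w
       then complex_of_real (1 / sqrt (real (n choose w))) else 0)"

definition dicke_map :: "nat \<Rightarrow> complex mat" where
  "dicke_map n = mat (2 ^ n) (n + 1) (\<lambda>(x, a). dicke_vec n a $ x)"

text \<open>Single-qubit Paulis: 0 = I, 1 = X, 2 = Y, 3 = Z; arguments are (row bit, column bit),
  with bit True meaning |1>.\<close>
definition pauli1 :: "nat \<Rightarrow> bool \<Rightarrow> bool \<Rightarrow> complex" where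
  "pauli1 s r c =
     (if s = 0 then (if r = c then 1 else 0)
      else if s = 1 then (if r \<noteq> c then 1 else 0)
      else if s = 2 then (if r \<and> \<not> c then \<i> else if \<not> r \<and> c then - \<i> else 0)
      else (if r = c then (if r then -1 else 1) else 0))"

definition pauli :: "nat \<Rightarrow> (nat \<Rightarrow> nat) \<Rightarrow> complex mat" where
  "pauli n p = mat (2 ^ n) (2 ^ n) (\<lambda>(x, y). \<Prod>i<n. pauli1 (p i) (bit x i) (bit y i))"

definition is_pauli :: "nat \<Rightarrow> (nat \<Rightarrow> nat) \<Rightarrow> bool" where
  "is_pauli n p \<longleftrightarrow> (\<forall>i<n. p i < 4)"

definition pauli_support :: "nat \<Rightarrow> (nat \<Rightarrow> nat) \<Rightarrow> nat set" where
  "pauli_support n p = {i. i < n \<and> p i \<noteq> 0}"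

definition pauli_weight :: "nat \<Rightarrow> (nat \<Rightarrow> nat) \<Rightarrow> nat" where
  "pauli_weight n p = card (pauli_support n p)"

definition perm_mat :: "nat \<Rightarrow> (nat \<Rightarrow> nat) \<Rightarrow> complex mat" where
  "perm_mat n \<sigma> = mat (2 ^ n) (2 ^ n) (\<lambda>(x, y). if (\<forall>i<n. bit x i = bit y (\<sigma> i)) then 1 else 0)"

definition Sym :: "nat \<Rightarrow> complex mat \<Rightarrow> complex mat" where
  "Sym n A = mat (2 ^ n) (2 ^ n) (\<lambda>(x, y).
     (1 / fact n) * (\<Sum>\<sigma>\<in>{\<sigma>. \<sigma> permutes {..<n}}. (mat_adjoint (perm_mat n \<sigma>) * A * perm_mat n \<sigma>) $$ (x, y)))"

definition Sph :: "nat \<Rightarrow> (nat \<Rightarrow> nat) \<Rightarrow> complex mat" where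
  "Sph n p = foldr (\<lambda>i M. Sym n (pauli n (\<lambda>i'. if i' = i then p i else 0)) * M)
               (sorted_list_of_set (pauli_support n p)) (1\<^sub>m (2 ^ n))"

end

theory Submission
  imports Defs
begin


definition ff :: "real \<Rightarrow> nat \<Rightarrow> real" where
  "ff x m = (\<Prod>l<m. x - real l)"

lemma ff_0[simp]: "ff x 0 = 1" by (simp add: ff_def)
lemma ff_Suc: "ff x (Suc m) = ff x m * (x - real m)" by (simp add: ff_def)

lemma ff_nat_gt: "m < i \<Longrightarrow> ff (real m) i = 0"
  unfolding ff_def by (rule prod_zero) auto

lemma ff_fact: "i \<le> m \<Longrightarrow> ff (real m) i * fact (m - i) = fact m"
proof (induction i)
  case 0 then show ?case by simp
next
  case (Suc i)
  then have e1: "m - i = Suc (m - Suc i)" by simp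
  then have e2: "fact (m - i) = real (m - i) * fact (m - Suc i)" by simp
  have e3: "real (m - i) = real m - real i" using Suc by simp
  have "ff (real m) (Suc i) * fact (m - Suc i) = ff (real m) i * (real (m - i) * fact (m - Suc i))"
    by (simp add: ff_Suc e3)
  also have "\<dots> = ff (real m) i * fact (m - i)" using e2 by simp
  also have "\<dots> = fact m" using Suc by simp
  finally show ?case .
qed

lemma fact_inv_fact_int: "fact m * inv_fact_int (int m - int i) = ff (real m) i"
proof (cases "i \<le> m")
  case True
  then have h: "int m - int i = int (m - i)" by simp
  have h2: "inv_fact_int (int m - int i) = 1 / fact (m - i)" unfolding h inv_fact_int_def by simp
  have h3: "(fact (m - i) :: real) \<noteq> 0" by simp
  show ?thesis unfolding h2 using ff_fact[OF True] h3
    by (metis nonzero_mult_div_cancel_right times_divide_eq_right mult.right_neutral)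
next
  case False then show ?thesis by (simp add: inv_fact_int_def ff_nat_gt)
qed

lemma cg_valid_iff:
  assumes "b \<le> n" "a \<le> n"
  shows "cg_valid (int n) (int n - 2 * int b) (2 * int k) (2 * q) (int n) (int n - 2 * int a)
     \<longleftrightarrow> (int a = int b + q \<and> \<bar>q\<bar> \<le> int k \<and> k \<le> n)"
proof -
  have e1: "even (2 * int k + 2 * q)" by simp
  have e2: "even (int n + (int n - 2 * int a))" by simp
  have e3: "even (int n + (int n - 2 * int b))" by simp
  have e4: "even (2 * int k + int n + int n)" by simp
  have r: "(int n - 2 * int b = 2 * q + (int n - 2 * int a)) = (int a = int b + q)" by linarith
  have s1: "\<bar>int n - 2 * int a\<bar> \<le> int n" using assms by linarith
  have s2: "\<bar>int n - 2 * int b\<bar> \<le> int n" using assms by linarith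
  have s3: "(\<bar>2 * q\<bar> \<le> 2 * int k) = (\<bar>q\<bar> \<le> int k)" by linarith
  have s4: "(\<bar>2 * int k - int n\<bar> \<le> int n) = (k \<le> n)" by linarith
  have s5: "int n \<le> 2 * int k + int n" by linarith
  show ?thesis unfolding cg_valid_def r using e1 e2 e3 e4 s1 s2 s3 s4 s5 by simp
qed

definition tmv :: "nat \<Rightarrow> nat \<Rightarrow> int \<Rightarrow> nat \<Rightarrow> nat \<Rightarrow> real" where
  "tmv n k q b t = (-1) ^ t / (fact t * fact (k - t)) *
     (if 0 \<le> q + int t \<and> 0 \<le> int k - q - int t then
        ff (real (n - b)) (nat (q + int t)) * ff (real b) (nat (int k - q - int t))
        / (fact (nat (q + int t)) * fact (nat (int k - q - int t)))
      else 0)"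

lemma term_eq:
  assumes "b \<le> n" "int a = int b + q" "t \<le> k"
  shows "fact b * fact (n - b) * ((-1) ^ t * inv_fact_int (int t) * inv_fact_int (int k - int t)
          * inv_fact_int (int k - q - int t) * inv_fact_int (int n - int a - int t)
          * inv_fact_int (q + int t) * inv_fact_int (int a - int k + int t)) = tmv n k q b t"
proof (cases "0 \<le> q + int t \<and> 0 \<le> int k - q - int t")
  case True
  define i where "i = nat (q + int t)"
  define j where "j = nat (int k - q - int t)"
  have hi: "int i = q + int t" using True unfolding i_def by simp
  have hj: "int j = int k - q - int t" using True unfolding j_def by simp
  have nb: "int (n - b) = int n - int b" using assms(1) by simp
  have e1: "int n - int a - int t = int (n - b) - int i" using assms(2) hi nb by linarith
  have e2: "int a - int k + int t = int b - int j" using assms(2) hj by linarith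
  have f1: "fact (n - b) * inv_fact_int (int (n - b) - int i) = ff (real (n - b)) i"
    by (rule fact_inv_fact_int)
  have f2: "fact b * inv_fact_int (int b - int j) = ff (real b) j"
    by (rule fact_inv_fact_int)
  have g1: "inv_fact_int (int t) = 1 / fact t" by (simp add: inv_fact_int_def)
  have kt: "int k - int t = int (k - t)" using assms(3) by simp
  have g2: "inv_fact_int (int k - int t) = 1 / fact (k - t)"
    unfolding kt inv_fact_int_def by simp
  have g3: "inv_fact_int (q + int t) = 1 / fact i" unfolding hi[symmetric] inv_fact_int_def by simp
  have g4: "inv_fact_int (int k - q - int t) = 1 / fact j" unfolding hj[symmetric] inv_fact_int_def by simp
  have "fact b * fact (n - b) * ((-1) ^ t * inv_fact_int (int t) * inv_fact_int (int k - int t)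
          * inv_fact_int (int k - q - int t) * inv_fact_int (int n - int a - int t)
          * inv_fact_int (q + int t) * inv_fact_int (int a - int k + int t))
      = (-1) ^ t * inv_fact_int (int t) * inv_fact_int (int k - int t)
          * inv_fact_int (int k - q - int t) * inv_fact_int (q + int t)
          * (fact (n - b) * inv_fact_int (int (n - b) - int i)) * (fact b * inv_fact_int (int b - int j))"
    unfolding e1 e2 by (simp only: mult_ac)
  also have "\<dots> = (-1) ^ t * (1 / fact t) * (1 / fact (k - t)) * (1 / fact j) * (1 / fact i)
          * ff (real (n - b)) i * ff (real b) j"
    unfolding f1 f2 g1 g2 g3 g4 by (simp only: mult_ac)
  also have "\<dots> = (-1) ^ t / (fact t * fact (k - t)) * (ff (real (n - b)) i * ff (real b) j / (fact i * fact j))"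
    by (simp add: mult_ac)
  also have "\<dots> = tmv n k q b t"
    unfolding tmv_def using True by (simp only: i_def j_def if_True simp_thms)
  finally show ?thesis .
next
  case False
  have t0: "tmv n k q b t = 0" unfolding tmv_def by (simp only: False if_False mult_zero_right)
  have "inv_fact_int (q + int t) = 0 \<or> inv_fact_int (int k - q - int t) = 0"
    using False by (auto simp: inv_fact_int_def)
  then show ?thesis unfolding t0 by (elim disjE) simp_all
qed

lemma div2: "x = 2 * y \<Longrightarrow> x div 2 = (y::int)" by simp

lemma sqrt_helper:
  fixes P Q N Z :: real
  assumes "P > 0" "Q > 0" "N > 0"
  shows "sqrt (N / P) / sqrt (N / Q) * P * sqrt Z = sqrt (P * Q * Z)"
proof -
  have "sqrt (N / P) / sqrt (N / Q) = sqrt (Q / P)"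
    unfolding real_sqrt_divide[symmetric] using assms by (simp add: field_simps)
  moreover have "P = sqrt (P * P)" using assms by simp
  ultimately have "sqrt (N / P) / sqrt (N / Q) * P * sqrt Z = sqrt (Q / P * (P * P) * Z)"
    by (metis real_sqrt_mult)
  also have "Q / P * (P * P) * Z = P * Q * Z" using assms by (simp add: field_simps)
  finally show ?thesis .
qed

definition Kc :: "nat \<Rightarrow> nat \<Rightarrow> int \<Rightarrow> real" where
  "Kc n k q = sqrt ((2 * real k + 1) / (real n + 1))
     * sqrt (real_of_int (int n + 1) * fact k * fact (n - k) * fact k / fact (n + k + 1))
     * sqrt (fact (nat (int k - q)) * fact (nat (int k + q)))"

lemma cg_eval:
  assumes "b \<le> n" "a \<le> n" "k \<le> n" "\<bar>q\<bar> \<le> int k" "int a = int b + q"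
  shows "cg (int n) (int n - 2 * int b) (2 * int k) (2 * q) (int n) (int n - 2 * int a) =
    sqrt (real_of_int (int n + 1) * fact k * fact (n - k) * fact k / fact (n + k + 1))
    * sqrt (fact (n - b) * fact b * fact (nat (int k - q)) * fact (nat (int k + q)) * fact a * fact (n - a))
    * (\<Sum>t\<in>{0..k}. (-1) ^ t * inv_fact_int (int t) * inv_fact_int (int k - int t)
          * inv_fact_int (int k - q - int t) * inv_fact_int (int n - int a - int t)
          * inv_fact_int (q + int t) * inv_fact_int (int a - int k + int t))"
proof -
  have v: "cg_valid (int n) (int n - 2 * int b) (2 * int k) (2 * q) (int n) (int n - 2 * int a)"
    using cg_valid_iff[OF assms(1,2)] assms by simp
  have d1: "(int n + 2 * int k - int n) div 2 = int k" by (rule div2) simp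
  have d2: "(int n - 2 * int k + int n) div 2 = int (n - k)" by (rule div2) (use assms in simp)
  have d3: "(2 * int k + int n - int n) div 2 = int k" by (rule div2) simp
  have d4: "(2 * int k + int n + int n) div 2 + 1 = int (n + k + 1)" 
  proof -
    have "(2 * int k + int n + int n) div 2 = int n + int k" by (rule div2) simp
    then show ?thesis by simp
  qed
  have d5: "(int n + (int n - 2 * int b)) div 2 = int (n - b)" by (rule div2) (use assms in simp)
  have d6: "(int n - (int n - 2 * int b)) div 2 = int b" by (rule div2) simp
  have d7: "(2 * int k - 2 * q) div 2 = int k - q" by (rule div2) simp
  have d8: "(2 * int k + 2 * q) div 2 = int k + q" by (rule div2) simp
  have d9: "(int n - (int n - 2 * int a)) div 2 = int a" by (rule div2) simp
  have d10: "(int n + (int n - 2 * int a)) div 2 = int (n - a)" by (rule div2) (use assms in simp)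
  have d11: "(int n - int n + 2 * q) div 2 = q" by (rule div2) simp
  have d12: "(int n - 2 * int k - (int n - 2 * int a)) div 2 = int a - int k" by (rule div2) simp
  have na: "int (n - a) = int n - int a" using assms by simp
  have na2: "nat (int n - int a) = n - a" using assms by simp
  have fk: "fact_int (int k - q) = fact (nat (int k - q))" "fact_int (int k + q) = fact (nat (int k + q))"
    by (simp_all add: fact_int_def)
  show ?thesis
    unfolding cg_def using v
    apply (simp only: if_True d1 d2 d3 d4 d5 d6 d7 d8 d9 d10 d11 d12 fk)
    apply (simp only: fact_int_def nat_int na na2)
    done
qed

lemma T_entry:
  assumes "b \<le> n" "a \<le> n" "k \<le> n" "\<bar>q\<bar> \<le> int k" "int a = int b + q"
  shows "sph_tensor n k q $$ (b, a) = complex_of_real (sqrt (real (n choose b)) / sqrt (real (n choose a))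
           * (Kc n k q * (\<Sum>t\<in>{0..k}. tmv n k q b t)))"
proof -
  define R where "R = (\<Sum>t\<in>{0..k}. (-1) ^ t * inv_fact_int (int t) * inv_fact_int (int k - int t)
          * inv_fact_int (int k - q - int t) * inv_fact_int (int n - int a - int t)
          * inv_fact_int (q + int t) * inv_fact_int (int a - int k + int t))"
  define P :: real where "P = fact b * fact (n - b)"
  define Q :: real where "Q = fact a * fact (n - a)"
  define Z :: real where "Z = fact (nat (int k - q)) * fact (nat (int k + q))"
  have P0: "P > 0" and Q0: "Q > 0" unfolding P_def Q_def by simp_all
  have Cb: "real (n choose b) = fact n / P" unfolding P_def using binomial_fact[OF assms(1)] by simp
  have Ca: "real (n choose a) = fact n / Q" unfolding Q_def using binomial_fact[OF assms(2)] by simp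
  have S: "(\<Sum>t\<in>{0..k}. tmv n k q b t) = P * R"
    unfolding R_def sum_distrib_left P_def
    by (rule sum.cong) (use term_eq[OF assms(1) assms(5)] in auto)
  have S2: "sqrt (fact (n - b) * fact b * fact (nat (int k - q)) * fact (nat (int k + q)) * fact a * fact (n - a))
      = sqrt (real (n choose b)) / sqrt (real (n choose a)) * P * sqrt Z"
    unfolding Cb Ca sqrt_helper[OF P0 Q0 fact_gt_zero] unfolding P_def Q_def Z_def
    by (simp only: mult_ac)
  have "sph_tensor n k q $$ (b, a) = complex_of_real (sqrt ((2 * real k + 1) / (real n + 1))
      * cg (int n) (int n - 2 * int b) (2 * int k) (2 * q) (int n) (int n - 2 * int a))"
    unfolding sph_tensor_def using assms by simp
  also have "\<dots> = complex_of_real (sqrt (real (n choose b)) / sqrt (real (n choose a))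
           * (Kc n k q * (\<Sum>t\<in>{0..k}. tmv n k q b t)))"
    unfolding cg_eval[OF assms] S2 S Kc_def R_def[symmetric] Z_def by (simp only: mult_ac)
  finally show ?thesis .
qed

lemma T_entry0:
  assumes "b \<le> n" "a \<le> n" "int a \<noteq> int b + q"
  shows "sph_tensor n k q $$ (b, a) = 0"
proof -
  have "\<not> cg_valid (int n) (int n - 2 * int b) (2 * int k) (2 * q) (int n) (int n - 2 * int a)"
    using cg_valid_iff[OF assms(1,2)] assms(3) by simp
  then show ?thesis unfolding sph_tensor_def cg_def using assms by simp
qed

definition OM :: "nat \<Rightarrow> int \<Rightarrow> (nat \<Rightarrow> real) \<Rightarrow> complex mat" where
  "OM n q f = mat (n + 1) (n + 1) (\<lambda>(b, a). if int a = int b + q then complex_of_real (f b) else 0)"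

definition scl :: "nat \<Rightarrow> complex mat \<Rightarrow> complex mat" where
  "scl n M = mat (n + 1) (n + 1) (\<lambda>(b, a).
      complex_of_real (sqrt (real (n choose b)) / sqrt (real (n choose a))) * M $$ (b, a))"

definition KL :: "complex vec set \<Rightarrow> complex mat \<Rightarrow> bool" where
  "KL C M \<longleftrightarrow> (\<exists>c. \<forall>u\<in>C. \<forall>v\<in>C. braket u (M *\<^sub>v v) = c * braket u v)"

lemma OM_carrier[simp]: "OM n q f \<in> carrier_mat (n + 1) (n + 1)" by (simp add: OM_def)
lemma scl_carrier[simp]: "scl n M \<in> carrier_mat (n + 1) (n + 1)" by (simp add: scl_def)
lemma OM_carrier'[simp]: "OM n q f \<in> carrier_mat (Suc n) (Suc n)" by (simp add: OM_def)
lemma scl_carrier'[simp]: "scl n M \<in> carrier_mat (Suc n) (Suc n)" by (simp add: scl_def)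

lemma T_OM:
  assumes "k \<le> n" "\<bar>q\<bar> \<le> int k"
  shows "sph_tensor n k q = scl n (OM n q (\<lambda>b. Kc n k q * (\<Sum>t\<in>{0..k}. tmv n k q b t)))"
proof (rule eq_matI)
  show "dim_row (sph_tensor n k q) = dim_row (scl n (OM n q (\<lambda>b. Kc n k q * (\<Sum>t\<in>{0..k}. tmv n k q b t))))"
    by (simp add: sph_tensor_def scl_def)
  show "dim_col (sph_tensor n k q) = dim_col (scl n (OM n q (\<lambda>b. Kc n k q * (\<Sum>t\<in>{0..k}. tmv n k q b t))))"
    by (simp add: sph_tensor_def scl_def)
  fix b a assume ba: "b < dim_row (scl n (OM n q (\<lambda>b. Kc n k q * (\<Sum>t\<in>{0..k}. tmv n k q b t))))"
     "a < dim_col (scl n (OM n q (\<lambda>b. Kc n k q * (\<Sum>t\<in>{0..k}. tmv n k q b t))))"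
  then have b: "b \<le> n" and a: "a \<le> n" by (simp_all add: scl_def)
  show "sph_tensor n k q $$ (b, a) = scl n (OM n q (\<lambda>b. Kc n k q * (\<Sum>t\<in>{0..k}. tmv n k q b t))) $$ (b, a)"
  proof (cases "int a = int b + q")
    case True
    show ?thesis unfolding T_entry[OF b a assms True] using a b True
      by (simp add: scl_def OM_def of_real_mult)
  next
    case False
    show ?thesis unfolding T_entry0[OF b a False] using a b False
      by (simp add: scl_def OM_def)
  qed
qed

lemma braket_add:
  "dim_vec x = dim_vec u \<Longrightarrow> dim_vec y = dim_vec u \<Longrightarrow> braket u (x + y) = braket u x + braket u y"
  unfolding braket_def by (simp add: algebra_simps sum.distrib)

lemma braket_smult:
  "dim_vec x = dim_vec u \<Longrightarrow> braket u (c \<cdot>\<^sub>v x) = c * braket u x"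
  unfolding braket_def by (simp add: sum_distrib_left algebra_simps)

lemma smult_mat_vec: "A \<in> carrier_mat nr nc \<Longrightarrow> v \<in> carrier_vec nc \<Longrightarrow> (c \<cdot>\<^sub>m A) *\<^sub>v v = c \<cdot>\<^sub>v (A *\<^sub>v v)"
  by (intro eq_vecI) (auto simp: scalar_prod_def sum_distrib_left mult.assoc)

lemma KL_add:
  assumes C: "C \<subseteq> carrier_vec N" and A: "A \<in> carrier_mat N N" and B: "B \<in> carrier_mat N N"
    and "KL C A" "KL C B"
  shows "KL C (A + B)"
proof -
  obtain ca where ca: "\<forall>u\<in>C. \<forall>v\<in>C. braket u (A *\<^sub>v v) = ca * braket u v" using assms(4) KL_def by auto
  obtain cb where cb: "\<forall>u\<in>C. \<forall>v\<in>C. braket u (B *\<^sub>v v) = cb * braket u v" using assms(5) KL_def by auto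
  have "\<forall>u\<in>C. \<forall>v\<in>C. braket u ((A + B) *\<^sub>v v) = (ca + cb) * braket u v"
  proof (intro ballI)
    fix u v assume u: "u \<in> C" and v: "v \<in> C"
    then have u': "u \<in> carrier_vec N" and v': "v \<in> carrier_vec N" using C by auto
    have "braket u ((A + B) *\<^sub>v v) = braket u (A *\<^sub>v v + B *\<^sub>v v)"
      using add_mult_distrib_mat_vec[OF A B v'] by simp
    also have "\<dots> = braket u (A *\<^sub>v v) + braket u (B *\<^sub>v v)"
      by (rule braket_add) (use A B u' in auto)
    also have "\<dots> = (ca + cb) * braket u v" using ca cb u v by (simp add: algebra_simps)
    finally show "braket u ((A + B) *\<^sub>v v) = (ca + cb) * braket u v" .
  qed
  then show ?thesis unfolding KL_def by blast
qed

lemma KL_smult: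
  assumes C: "C \<subseteq> carrier_vec N" and A: "A \<in> carrier_mat N N" and "KL C A"
  shows "KL C (c \<cdot>\<^sub>m A)"
proof -
  obtain ca where ca: "\<forall>u\<in>C. \<forall>v\<in>C. braket u (A *\<^sub>v v) = ca * braket u v" using assms(3) KL_def by auto
  have "\<forall>u\<in>C. \<forall>v\<in>C. braket u ((c \<cdot>\<^sub>m A) *\<^sub>v v) = (c * ca) * braket u v"
  proof (intro ballI)
    fix u v assume u: "u \<in> C" and v: "v \<in> C"
    then have u': "u \<in> carrier_vec N" and v': "v \<in> carrier_vec N" using C by auto
    have "braket u ((c \<cdot>\<^sub>m A) *\<^sub>v v) = braket u (c \<cdot>\<^sub>v (A *\<^sub>v v))"
      using smult_mat_vec[OF A v'] by simp
    also have "\<dots> = c * braket u (A *\<^sub>v v)" by (rule braket_smult) (use A u' in auto)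
    also have "\<dots> = (c * ca) * braket u v" using ca u v by simp
    finally show "braket u ((c \<cdot>\<^sub>m A) *\<^sub>v v) = (c * ca) * braket u v" .
  qed
  then show ?thesis unfolding KL_def by blast
qed

lemma scl_OM_add: "scl n (OM n q (\<lambda>b. f b + g b)) = scl n (OM n q f) + scl n (OM n q g)"
  by (rule eq_matI) (auto simp: scl_def OM_def algebra_simps add_divide_distrib)

lemma scl_OM_smult: "scl n (OM n q (\<lambda>b. c * f b)) = complex_of_real c \<cdot>\<^sub>m scl n (OM n q f)"
  by (rule eq_matI) (auto simp: scl_def OM_def algebra_simps)

section \<open>Polynomials\<close>

definition ffp :: "real poly \<Rightarrow> nat \<Rightarrow> real poly" where
  "ffp p m = (\<Prod>l<m. p - [:real l:])"

lemma poly_ffp: "poly (ffp p m) x = ff (poly p x) m"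
  unfolding ffp_def ff_def by (simp add: poly_prod)

lemma coeff_mult_bound:
  fixes A B :: "real poly"
  assumes "degree A \<le> a" "degree B \<le> b"
  shows "coeff (A * B) (a + b) = coeff A a * coeff B b"
proof (cases "degree A = a \<and> degree B = b")
  case True then show ?thesis using coeff_mult_degree_sum by metis
next
  case False
  then have "degree A < a \<or> degree B < b" using assms by auto
  then have z: "coeff A a * coeff B b = 0" by (auto simp: coeff_eq_0)
  have "degree (A * B) < a + b" using degree_mult_le[of A B] False assms by linarith
  then have "coeff (A * B) (a + b) = 0" by (simp add: coeff_eq_0)
  then show ?thesis using z by simp
qed

lemma degree_mult_bound:
  fixes A B :: "real poly"
  assumes "degree A \<le> a" "degree B \<le> b"
  shows "degree (A * B) \<le> a + b"
  using degree_mult_le[of A B] assms by linarith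

lemma ffp_deg:
  assumes "degree p \<le> 1"
  shows "degree (ffp p m) \<le> m \<and> coeff (ffp p m) m = coeff p 1 ^ m"
proof (induction m)
  case 0 then show ?case by (simp add: ffp_def)
next
  case (Suc m)
  have e: "ffp p (Suc m) = ffp p m * (p - [:real m:])" unfolding ffp_def by simp
  have d1: "degree (p - [:real m:]) \<le> 1" using assms by (intro degree_diff_le) auto
  have c1: "coeff (p - [:real m:]) 1 = coeff p 1" by simp
  show ?case unfolding e using degree_mult_bound[OF conjunct1[OF Suc.IH] d1]
      coeff_mult_bound[OF conjunct1[OF Suc.IH] d1] Suc.IH c1 by simp
qed

lemma tri:
  fixes Pr :: "(nat \<Rightarrow> real) \<Rightarrow> bool" and \<phi> :: "nat \<Rightarrow> real"
  assumes base: "\<And>m. m \<le> M \<Longrightarrow> \<exists>Q. degree Q \<le> m \<and> coeff Q m \<noteq> 0 \<and> Pr (\<lambda>b. \<phi> b * poly Q (real b))"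
    and add: "\<And>f g. Pr f \<Longrightarrow> Pr g \<Longrightarrow> Pr (\<lambda>b. f b + g b)"
    and smul: "\<And>c f. Pr f \<Longrightarrow> Pr (\<lambda>b. c * f b)"
    and h: "degree h \<le> M"
  shows "Pr (\<lambda>b. \<phi> b * poly h (real b))"
  using base h
proof (induction M arbitrary: h)
  case 0
  obtain Q where Q: "degree Q \<le> 0" "coeff Q 0 \<noteq> 0" "Pr (\<lambda>b. \<phi> b * poly Q (real b))"
    using "0.prems"(1)[of 0] by auto
  define c where "c = coeff h 0 / coeff Q 0"
  have hQ: "h = smult c Q"
  proof -
    have "degree h = 0" "degree Q = 0" using "0.prems"(2) Q(1) by auto
    then have "h = [:coeff h 0:]" "Q = [:coeff Q 0:]" by (auto elim: degree_eq_zeroE)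
    then show ?thesis unfolding c_def using Q(2) by (metis mult.commute nonzero_divide_eq_eq smult_pCons smult_0_right)
  qed
  have "Pr (\<lambda>b. c * (\<phi> b * poly Q (real b)))" by (rule smul) (rule Q(3))
  then show ?case unfolding hQ by (simp add: algebra_simps)
next
  case (Suc M)
  obtain Q where Q: "degree Q \<le> Suc M" "coeff Q (Suc M) \<noteq> 0" "Pr (\<lambda>b. \<phi> b * poly Q (real b))"
    using Suc.prems(1)[of "Suc M"] by auto
  define c where "c = coeff h (Suc M) / coeff Q (Suc M)"
  define h' where "h' = h - smult c Q"
  have "degree h' \<le> Suc M" unfolding h'_def using Suc.prems(2) Q(1)
    by (intro degree_diff_le) (auto intro: le_trans[OF degree_smult_le])
  moreover have "coeff h' (Suc M) = 0" unfolding h'_def c_def using Q(2) by simp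
  ultimately have "degree h' \<le> M"
    by (metis Suc_leI degree_le le_antisym le_degree not_less_eq_eq leading_coeff_0_iff degree_0 le_zero_eq)
  then have P1: "Pr (\<lambda>b. \<phi> b * poly h' (real b))" using Suc.IH Suc.prems(1) by auto
  have P2: "Pr (\<lambda>b. c * (\<phi> b * poly Q (real b)))" by (rule smul) (rule Q(3))
  have "Pr (\<lambda>b. \<phi> b * poly h' (real b) + c * (\<phi> b * poly Q (real b)))" by (rule add[OF P1 P2])
  moreover have "h = h' + smult c Q" unfolding h'_def by simp
  ultimately show ?case by (simp add: algebra_simps)
qed

lemma ff_split: "ff x (m + l) = ff x m * ff (x - real m) l"
proof (induction l)
  case 0 then show ?case by simp
next
  case (Suc l)
  have "ff x (m + Suc l) = ff x (m + l) * (x - real (m + l))" by (simp add: ff_Suc)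
  also have "\<dots> = ff x m * (ff (x - real m) l * (x - real m - real l))" using Suc by (simp add: algebra_simps)
  also have "\<dots> = ff x m * ff (x - real m) (Suc l)" by (simp add: ff_Suc)
  finally show ?case .
qed

lemma ff_split': "m \<le> i \<Longrightarrow> ff x i = ff x m * ff (x - real m) (i - m)"
  using ff_split[of x m "i - m"] by simp

lemma OM_cong: "(\<And>b. b \<le> n \<Longrightarrow> f b = g b) \<Longrightarrow> OM n q f = OM n q g"
  unfolding OM_def by (rule eq_matI) auto

definition qp :: "int \<Rightarrow> nat" where "qp q = nat (max q 0)"
definition qm :: "int \<Rightarrow> nat" where "qm q = nat (max (- q) 0)"

definition phi :: "nat \<Rightarrow> int \<Rightarrow> nat \<Rightarrow> real" where
  "phi n q b = ff (real (n - b)) (qp q) * ff (real b) (qm q)"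

definition PA :: "nat \<Rightarrow> int \<Rightarrow> real poly" where "PA n q = [:real n - real (qp q), -1:]"
definition PB :: "int \<Rightarrow> real poly" where "PB q = [:- real (qm q), 1:]"

lemma poly_PA: "b \<le> n \<Longrightarrow> poly (PA n q) (real b) = real (n - b) - real (qp q)"
  unfolding PA_def by simp
lemma poly_PB: "poly (PB q) (real b) = real b - real (qm q)"
  unfolding PB_def by simp
lemma deg_PA: "degree (PA n q) \<le> 1" and coeff_PA: "coeff (PA n q) 1 = -1"
  unfolding PA_def by auto
lemma deg_PB: "degree (PB q) \<le> 1" and coeff_PB: "coeff (PB q) 1 = 1"
  unfolding PB_def by auto

lemma qpm_facts: "int (qp q) - int (qm q) = q" "qp q + qm q = nat \<bar>q\<bar>"
  unfolding qp_def qm_def by auto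

definition valid :: "nat \<Rightarrow> int \<Rightarrow> nat \<Rightarrow> bool" where
  "valid k q t \<longleftrightarrow> 0 \<le> q + int t \<and> 0 \<le> int k - q - int t"

lemma valid_idx:
  assumes "valid k q t" "t \<le> k"
  shows "qp q \<le> nat (q + int t)" "nat (q + int t) - qp q = t - qm q" "qm q \<le> t"
    "qm q \<le> nat (int k - q - int t)" "(t - qm q) + (nat (int k - q - int t) - qm q) = k - nat \<bar>q\<bar>"
  using assms unfolding valid_def qp_def qm_def by auto

definition cT :: "nat \<Rightarrow> int \<Rightarrow> nat \<Rightarrow> real" where
  "cT k q t = (-1) ^ t / (fact t * fact (k - t) * fact (nat (q + int t)) * fact (nat (int k - q - int t)))"

definition TQ :: "nat \<Rightarrow> nat \<Rightarrow> int \<Rightarrow> real poly" where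
  "TQ n k q = smult (Kc n k q) (\<Sum>t\<in>{0..k}. if valid k q t then
      smult (cT k q t) (ffp (PA n q) (t - qm q) * ffp (PB q) (nat (int k - q - int t) - qm q)) else 0)"

lemma tmv_eval:
  assumes "b \<le> n" "t \<le> k"
  shows "tmv n k q b t = phi n q b * poly (if valid k q t then
      smult (cT k q t) (ffp (PA n q) (t - qm q) * ffp (PB q) (nat (int k - q - int t) - qm q)) else 0) (real b)"
proof (cases "valid k q t")
  case True
  note vi = valid_idx[OF True assms(2)]
  have s1: "ff (real (n - b)) (nat (q + int t)) = ff (real (n - b)) (qp q) * ff (real (n - b) - real (qp q)) (t - qm q)"
    using ff_split'[OF vi(1)] vi(2) by simp
  have s2: "ff (real b) (nat (int k - q - int t)) = ff (real b) (qm q) * ff (real b - real (qm q)) (nat (int k - q - int t) - qm q)"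
    using ff_split'[OF vi(4)] by simp
  have "tmv n k q b t = (-1) ^ t / (fact t * fact (k - t)) *
        (ff (real (n - b)) (nat (q + int t)) * ff (real b) (nat (int k - q - int t))
        / (fact (nat (q + int t)) * fact (nat (int k - q - int t))))"
    unfolding tmv_def using True unfolding valid_def by simp
  also have "\<dots> = phi n q b * (cT k q t * (ff (real (n - b) - real (qp q)) (t - qm q) *
      ff (real b - real (qm q)) (nat (int k - q - int t) - qm q)))"
    unfolding s1 s2 phi_def cT_def by (simp add: field_simps)
  finally show ?thesis using True assms
    by (simp add: poly_ffp poly_PA poly_PB)
next
  case False
  have nv: "\<not> (0 \<le> q + int t \<and> 0 \<le> int k - q - int t)" using False unfolding valid_def .
  show ?thesis unfolding tmv_def using False nv by (simp only: if_False poly_0 mult_zero_right)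
qed

lemma TQ_eval:
  assumes "b \<le> n"
  shows "Kc n k q * (\<Sum>t\<in>{0..k}. tmv n k q b t) = phi n q b * poly (TQ n k q) (real b)"
proof -
  have "(\<Sum>t\<in>{0..k}. tmv n k q b t) = (\<Sum>t\<in>{0..k}. phi n q b * poly (if valid k q t then
      smult (cT k q t) (ffp (PA n q) (t - qm q) * ffp (PB q) (nat (int k - q - int t) - qm q)) else 0) (real b))"
    by (rule sum.cong) (use tmv_eval[OF assms] in auto)
  then show ?thesis unfolding TQ_def by (simp add: poly_sum sum_distrib_left algebra_simps)
qed

lemma Kc_pos: "Kc n k q > 0"
  unfolding Kc_def by (intro mult_pos_pos real_sqrt_gt_zero) auto

lemma sign_lemma:
  assumes "valid k q t" "t \<le> k"
  shows "(-1::real) ^ t * (-1) ^ (t - qm q) = (-1) ^ qm q"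
proof -
  obtain s where s: "t = qm q + s" using valid_idx(3)[OF assms] le_Suc_ex by blast
  have "(-1::real) ^ s * (-1) ^ s = 1" by (simp add: power_mult_distrib[symmetric])
  then show ?thesis unfolding s by (simp add: power_add)
qed

lemma TQ_deg:
  assumes "\<bar>q\<bar> \<le> int k"
  shows "degree (TQ n k q) \<le> k - nat \<bar>q\<bar> \<and> coeff (TQ n k q) (k - nat \<bar>q\<bar>) \<noteq> 0"
proof -
  define D where "D = k - nat \<bar>q\<bar>"
  define F where "F = (\<lambda>t. if valid k q t then
      smult (cT k q t) (ffp (PA n q) (t - qm q) * ffp (PB q) (nat (int k - q - int t) - qm q)) else 0)"
  have dF: "degree (F t) \<le> D \<and> coeff (F t) D = (if valid k q t then (-1) ^ qm q /
      (fact t * fact (k - t) * fact (nat (q + int t)) * fact (nat (int k - q - int t))) else 0)"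
    if t: "t \<in> {0..k}" for t
  proof (cases "valid k q t")
    case True
    have tk: "t \<le> k" using t by simp
    note vi = valid_idx[OF True tk]
    have a1: "degree (ffp (PA n q) (t - qm q)) \<le> t - qm q"
      and a2: "coeff (ffp (PA n q) (t - qm q)) (t - qm q) = (-1) ^ (t - qm q)"
      using ffp_deg[OF deg_PA, of n q "t - qm q"] coeff_PA by auto
    have b1: "degree (ffp (PB q) (nat (int k - q - int t) - qm q)) \<le> nat (int k - q - int t) - qm q"
      and b2: "coeff (ffp (PB q) (nat (int k - q - int t) - qm q)) (nat (int k - q - int t) - qm q) = 1"
      using ffp_deg[OF deg_PB, of q "nat (int k - q - int t) - qm q"] coeff_PB by auto
    have DD: "D = (t - qm q) + (nat (int k - q - int t) - qm q)" unfolding D_def using vi(5) by simp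
    have "degree (F t) = degree (smult (cT k q t) (ffp (PA n q) (t - qm q) * ffp (PB q) (nat (int k - q - int t) - qm q)))"
      unfolding F_def using True by simp
    also have "\<dots> \<le> degree (ffp (PA n q) (t - qm q) * ffp (PB q) (nat (int k - q - int t) - qm q))"
      by (rule degree_smult_le)
    also have "\<dots> \<le> D" unfolding DD by (rule degree_mult_bound[OF a1 b1])
    finally have "degree (F t) \<le> D" .
    moreover have "coeff (F t) D = cT k q t * (-1) ^ (t - qm q)"
      unfolding F_def DD using True coeff_mult_bound[OF a1 b1] a2 b2 by simp
    moreover have "cT k q t * (-1) ^ (t - qm q) = (-1) ^ qm q /
      (fact t * fact (k - t) * fact (nat (q + int t)) * fact (nat (int k - q - int t)))"
      unfolding cT_def using sign_lemma[OF True tk] by (simp add: field_simps)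
    ultimately show ?thesis using True by simp
  next
    case False then show ?thesis unfolding F_def by simp
  qed
  have deg: "degree (TQ n k q) \<le> D" unfolding TQ_def F_def[symmetric]
    by (rule le_trans[OF degree_smult_le], rule degree_sum_le) (use dF in auto)
  have co: "coeff (TQ n k q) D = Kc n k q * ((-1) ^ qm q * (\<Sum>t\<in>{0..k}. if valid k q t then 1 /
      (fact t * fact (k - t) * fact (nat (q + int t)) * fact (nat (int k - q - int t))) else 0))"
    unfolding TQ_def F_def[symmetric] coeff_smult coeff_sum sum_distrib_left
    by (rule sum.cong) (use dF in auto)
  have t0: "qm q \<in> {0..k}" "valid k q (qm q)" using assms unfolding qm_def valid_def by auto
  have pos: "(\<Sum>t\<in>{0..k}. if valid k q t then 1 /
      (fact t * fact (k - t) * fact (nat (q + int t)) * fact (nat (int k - q - int t))) else 0) > (0::real)"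
    by (rule sum_pos2[OF _ t0(1)]) (use t0 in auto)
  have "coeff (TQ n k q) D \<noteq> 0" unfolding co using pos Kc_pos[of n k q] by simp
  then show ?thesis using deg unfolding D_def by simp
qed

section \<open>KL for polynomial offset matrices and G matrices\<close>

lemma KL_poly:
  assumes C: "C \<subseteq> carrier_vec (n + 1)"
    and T: "\<And>k q. k < d \<Longrightarrow> \<bar>q\<bar> \<le> int k \<Longrightarrow> KL C (sph_tensor n k q)"
    and w: "w < d" "w \<le> n" and qw: "nat \<bar>q\<bar> \<le> w" and h: "degree h \<le> w - nat \<bar>q\<bar>"
  shows "KL C (scl n (OM n q (\<lambda>b. phi n q b * poly h (real b))))"
proof (rule tri[where Pr = "\<lambda>f. KL C (scl n (OM n q f))" and M = "w - nat \<bar>q\<bar>", OF _ _ _ h])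
  fix m assume m: "m \<le> w - nat \<bar>q\<bar>"
  define k where "k = nat \<bar>q\<bar> + m"
  have kw: "k \<le> w" and qk: "\<bar>q\<bar> \<le> int k" and km: "k - nat \<bar>q\<bar> = m" using m qw unfolding k_def by auto
  have "KL C (sph_tensor n k q)" using T[OF _ qk] kw w by simp
  moreover have "sph_tensor n k q = scl n (OM n q (\<lambda>b. phi n q b * poly (TQ n k q) (real b)))"
    unfolding T_OM[OF le_trans[OF kw w(2)] qk] by (rule arg_cong[where f = "scl n"], rule OM_cong) (rule TQ_eval)
  ultimately show "\<exists>Q. degree Q \<le> m \<and> coeff Q m \<noteq> 0 \<and> KL C (scl n (OM n q (\<lambda>b. phi n q b * poly Q (real b))))"
    using TQ_deg[OF qk, of n] km by auto
next
  fix f g assume "KL C (scl n (OM n q f))" "KL C (scl n (OM n q g))"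
  then show "KL C (scl n (OM n q (\<lambda>b. f b + g b)))" unfolding scl_OM_add
    by (intro KL_add[OF C]) auto
next
  fix c f assume "KL C (scl n (OM n q f))"
  then show "KL C (scl n (OM n q (\<lambda>b. c * f b)))" unfolding scl_OM_smult
    by (intro KL_smult[OF C]) auto
qed

definition Gm :: "nat \<Rightarrow> nat \<Rightarrow> nat \<Rightarrow> nat \<Rightarrow> complex mat" where
  "Gm n \<alpha> \<beta> \<delta> = OM n (int \<delta> - int \<beta>) (\<lambda>b. ff (real (n - b)) \<alpha> * ff (real b) \<beta>)"

lemma Gm_carrier[simp]: "Gm n \<alpha> \<beta> \<delta> \<in> carrier_mat (n + 1) (n + 1)" by (simp add: Gm_def OM_def)
lemma Gm_carrier'[simp]: "Gm n \<alpha> \<beta> \<delta> \<in> carrier_mat (Suc n) (Suc n)" by (simp add: Gm_def OM_def)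

lemma KL_G:
  assumes C: "C \<subseteq> carrier_vec (n + 1)"
    and T: "\<And>k q. k < d \<Longrightarrow> \<bar>q\<bar> \<le> int k \<Longrightarrow> KL C (sph_tensor n k q)"
    and w: "w < d" "w \<le> n" and ab: "\<alpha> + \<beta> \<le> w" "\<delta> \<le> \<alpha> + \<beta>"
  shows "KL C (scl n (Gm n \<alpha> \<beta> \<delta>))"
proof -
  define q where "q = int \<delta> - int \<beta>"
  have a1: "qp q \<le> \<alpha>" and b1: "qm q \<le> \<beta>" and qw: "nat \<bar>q\<bar> \<le> w"
    and s: "nat \<bar>q\<bar> = qp q + qm q"
    using ab unfolding q_def qp_def qm_def by auto
  define h where "h = ffp (PA n q) (\<alpha> - qp q) * ffp (PB q) (\<beta> - qm q)"
  have "degree h \<le> (\<alpha> - qp q) + (\<beta> - qm q)" unfolding h_def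
    by (rule degree_mult_bound) (use ffp_deg[OF deg_PA] ffp_deg[OF deg_PB] in auto)
  also have "\<dots> \<le> w - nat \<bar>q\<bar>" using a1 b1 s ab by linarith
  finally have dh: "degree h \<le> w - nat \<bar>q\<bar>" .
  have "Gm n \<alpha> \<beta> \<delta> = OM n q (\<lambda>b. phi n q b * poly h (real b))"
    unfolding Gm_def q_def[symmetric]
  proof (rule OM_cong)
    fix b assume b: "b \<le> n"
    show "ff (real (n - b)) \<alpha> * ff (real b) \<beta> = phi n q b * poly h (real b)"
      unfolding h_def phi_def poly_mult poly_ffp poly_PA[OF b] poly_PB
        ff_split'[OF a1, of "real (n - b)"] ff_split'[OF b1, of "real b"] by (simp only: mult_ac)
  qed
  then show ?thesis using KL_poly[OF C T w qw dh] by simp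
qed

inductive lin :: "nat \<Rightarrow> nat \<Rightarrow> complex mat \<Rightarrow> bool" for n where
  G: "\<alpha> + \<beta> \<le> w \<Longrightarrow> \<delta> \<le> \<alpha> + \<beta> \<Longrightarrow> lin n w (Gm n \<alpha> \<beta> \<delta>)"
| add: "lin n w A \<Longrightarrow> lin n w B \<Longrightarrow> lin n w (A + B)"
| smult: "lin n w A \<Longrightarrow> lin n w (c \<cdot>\<^sub>m A)"

lemma lin_carrier: "lin n w A \<Longrightarrow> A \<in> carrier_mat (n + 1) (n + 1)"
  by (induction rule: lin.induct) auto

lemma scl_add: "A \<in> carrier_mat (n + 1) (n + 1) \<Longrightarrow> B \<in> carrier_mat (n + 1) (n + 1) \<Longrightarrow>
  scl n (A + B) = scl n A + scl n B"
  by (rule eq_matI) (auto simp: scl_def algebra_simps add_divide_distrib)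

lemma scl_smult: "A \<in> carrier_mat (n + 1) (n + 1) \<Longrightarrow> scl n (c \<cdot>\<^sub>m A) = c \<cdot>\<^sub>m scl n A"
  by (rule eq_matI) (auto simp: scl_def algebra_simps)

lemma KL_lin:
  assumes C: "C \<subseteq> carrier_vec (n + 1)"
    and T: "\<And>k q. k < d \<Longrightarrow> \<bar>q\<bar> \<le> int k \<Longrightarrow> KL C (sph_tensor n k q)"
  shows "lin n w A \<Longrightarrow> w < d \<Longrightarrow> w \<le> n \<Longrightarrow> KL C (scl n A)"
proof (induction rule: lin.induct)
  case (G \<alpha> \<beta> w' \<delta>)
  show ?case by (rule KL_G[OF C T G.prems G.hyps])
next
  case (add w' A B)
  have "A \<in> carrier_mat (n + 1) (n + 1)" "B \<in> carrier_mat (n + 1) (n + 1)"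
    using add.hyps lin_carrier by auto
  then show ?case unfolding scl_add[OF \<open>A \<in> _\<close> \<open>B \<in> _\<close>] using add KL_add[OF C] by auto
next
  case (smult w' A c)
  have "A \<in> carrier_mat (n + 1) (n + 1)" using smult.hyps lin_carrier by auto
  then show ?case unfolding scl_smult[OF \<open>A \<in> _\<close>] using smult KL_smult[OF C] by auto
qed

section \<open>Ladder matrices\<close>

definition Lm :: "nat \<Rightarrow> complex mat" where
  "Lm n = mat (n + 1) (n + 1) (\<lambda>(b, a). if a = b - 1 then complex_of_real (real b) else 0)"
definition Rm :: "nat \<Rightarrow> complex mat" where
  "Rm n = mat (n + 1) (n + 1) (\<lambda>(b, a). if a = b + 1 then complex_of_real (real (n - b)) else 0)"
definition Nm :: "nat \<Rightarrow> complex mat" where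
  "Nm n = mat (n + 1) (n + 1) (\<lambda>(b, a). if a = b then complex_of_real (real b) else 0)"

lemma LRN_carrier[simp]:
  "Lm n \<in> carrier_mat (Suc n) (Suc n)" "Rm n \<in> carrier_mat (Suc n) (Suc n)" "Nm n \<in> carrier_mat (Suc n) (Suc n)"
  "Lm n \<in> carrier_mat (n + 1) (n + 1)" "Rm n \<in> carrier_mat (n + 1) (n + 1)" "Nm n \<in> carrier_mat (n + 1) (n + 1)"
  by (simp_all add: Lm_def Rm_def Nm_def)

lemma mult_single:
  assumes A: "A \<in> carrier_mat N N" and B: "B \<in> carrier_mat N N" and b: "b < N" and a: "a < N"
    and row: "\<And>c. c < N \<Longrightarrow> A $$ (b, c) = (if c = s then x else 0)"
  shows "(A * B) $$ (b, a) = (if s < N then x * B $$ (s, a) else 0)"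
proof -
  have "(A * B) $$ (b, a) = (\<Sum>c\<in>{0..<N}. A $$ (b, c) * B $$ (c, a))"
    using A B a b by (simp add: scalar_prod_def)
  also have "\<dots> = (\<Sum>c\<in>{0..<N}. if c = s then x * B $$ (s, a) else 0)"
    by (rule sum.cong) (auto simp: row)
  also have "\<dots> = (if s < N then x * B $$ (s, a) else 0)" by simp
  finally show ?thesis .
qed

lemma Gm_entry: "b \<le> n \<Longrightarrow> a \<le> n \<Longrightarrow> Gm n \<alpha> \<beta> \<delta> $$ (b, a) =
  (if int a = int b + (int \<delta> - int \<beta>) then complex_of_real (ff (real (n - b)) \<alpha> * ff (real b) \<beta>) else 0)"
  unfolding Gm_def OM_def by simp

lemma ff_Suc': "ff x (Suc m) = x * ff (x - 1) m"
proof (induction m)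
  case 0 then show ?case by (simp add: ff_Suc)
next
  case (Suc m)
  have "ff x (Suc (Suc m)) = ff x (Suc m) * (x - real (Suc m))" by (rule ff_Suc)
  also have "\<dots> = x * (ff (x - 1) m * (x - 1 - real m))" unfolding Suc by (simp add: algebra_simps)
  also have "\<dots> = x * ff (x - 1) (Suc m)" by (simp add: ff_Suc)
  finally show ?case .
qed

lemma ff_pascal: "ff (x + 1) m = ff x m + real m * ff x (m - 1)"
proof (cases m)
  case 0 then show ?thesis by simp
next
  case (Suc m')
  have "ff (x + 1) (Suc m') = (x + 1) * ff x m'" using ff_Suc'[of "x + 1" m'] by simp
  moreover have "ff x (Suc m') = ff x m' * (x - real m')" by (rule ff_Suc)
  ultimately show ?thesis unfolding Suc by (simp add: algebra_simps)
qed

lemma ff_zero_Suc: "ff 0 (Suc m) = 0"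
  using ff_nat_gt[of 0 "Suc m"] by simp

lemma cif:
  assumes "P \<Longrightarrow> u * X = Y + v * Z"
  shows "complex_of_real u * (if P then complex_of_real X else 0) =
    (if P then complex_of_real Y else 0) + complex_of_real v * (if P then complex_of_real Z else 0)"
proof (cases P)
  case True
  then have "complex_of_real (u * X) = complex_of_real (Y + v * Z)" using assms by simp
  then show ?thesis using True by (simp only: if_True of_real_mult of_real_add)
qed simp

lemma cif0:
  assumes "P \<Longrightarrow> u * X = Y"
  shows "complex_of_real u * (if P then complex_of_real X else 0) =
    (if P then complex_of_real Y else 0) + complex_of_real 0 * W"
proof (cases P)
  case True
  then have "complex_of_real (u * X) = complex_of_real Y" using assms by simp
  then show ?thesis using True by (simp only: if_True of_real_mult of_real_0 mult_zero_left add_0_right)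
qed simp

lemma L_G: "Lm n * Gm n \<alpha> \<beta> \<delta> = Gm n \<alpha> (Suc \<beta>) \<delta> + complex_of_real (real \<alpha>) \<cdot>\<^sub>m Gm n (\<alpha> - 1) (Suc \<beta>) \<delta>"
proof (rule eq_matI)
  fix b a assume "b < dim_row (Gm n \<alpha> (Suc \<beta>) \<delta> + complex_of_real (real \<alpha>) \<cdot>\<^sub>m Gm n (\<alpha> - 1) (Suc \<beta>) \<delta>)"
    "a < dim_col (Gm n \<alpha> (Suc \<beta>) \<delta> + complex_of_real (real \<alpha>) \<cdot>\<^sub>m Gm n (\<alpha> - 1) (Suc \<beta>) \<delta>)"
  then have b: "b \<le> n" and a: "a \<le> n" by (auto simp: Gm_def OM_def)
  have lhs: "(Lm n * Gm n \<alpha> \<beta> \<delta>) $$ (b, a) = complex_of_real (real b) * Gm n \<alpha> \<beta> \<delta> $$ (b - 1, a)"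
    using mult_single[of "Lm n" "Suc n" "Gm n \<alpha> \<beta> \<delta>" b a "b - 1" "complex_of_real (real b)"] a b
    by (simp add: Lm_def)
  have rhs: "(Gm n \<alpha> (Suc \<beta>) \<delta> + complex_of_real (real \<alpha>) \<cdot>\<^sub>m Gm n (\<alpha> - 1) (Suc \<beta>) \<delta>) $$ (b, a)
     = Gm n \<alpha> (Suc \<beta>) \<delta> $$ (b, a) + complex_of_real (real \<alpha>) * Gm n (\<alpha> - 1) (Suc \<beta>) \<delta> $$ (b, a)"
    using a b by (simp add: Gm_def OM_def)
  show "(Lm n * Gm n \<alpha> \<beta> \<delta>) $$ (b, a) =
    (Gm n \<alpha> (Suc \<beta>) \<delta> + complex_of_real (real \<alpha>) \<cdot>\<^sub>m Gm n (\<alpha> - 1) (Suc \<beta>) \<delta>) $$ (b, a)"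
    unfolding lhs rhs
  proof (cases b)
    case 0
    then show "complex_of_real (real b) * Gm n \<alpha> \<beta> \<delta> $$ (b - 1, a) =
      Gm n \<alpha> (Suc \<beta>) \<delta> $$ (b, a) + complex_of_real (real \<alpha>) * Gm n (\<alpha> - 1) (Suc \<beta>) \<delta> $$ (b, a)"
      using a b by (simp add: Gm_entry ff_zero_Suc)
  next
    case (Suc b')
    have bb: "b - 1 = b'" "b' < n" using Suc b by auto
    have cond: "(int a = int b' + (int \<delta> - int \<beta>)) = (int a = int b + (int \<delta> - int (Suc \<beta>)))"
      using Suc by simp
    have h1: "ff (real b) (Suc \<beta>) = real b * ff (real b') \<beta>"
      using ff_Suc'[of "real b" \<beta>] Suc by simp
    have h2: "ff (real (n - b')) \<alpha> = ff (real (n - b)) \<alpha> + real \<alpha> * ff (real (n - b)) (\<alpha> - 1)"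
      using ff_pascal[of "real (n - b)" \<alpha>] Suc bb by (simp add: of_nat_diff)
    have key: "real b * (ff (real (n - b')) \<alpha> * ff (real b') \<beta>) =
       ff (real (n - b)) \<alpha> * ff (real b) (Suc \<beta>) + real \<alpha> * (ff (real (n - b)) (\<alpha> - 1) * ff (real b) (Suc \<beta>))"
      unfolding h1 h2 by (simp add: algebra_simps)
    show "complex_of_real (real b) * Gm n \<alpha> \<beta> \<delta> $$ (b - 1, a) =
      Gm n \<alpha> (Suc \<beta>) \<delta> $$ (b, a) + complex_of_real (real \<alpha>) * Gm n (\<alpha> - 1) (Suc \<beta>) \<delta> $$ (b, a)"
      unfolding bb(1) Gm_entry[OF less_imp_le[OF bb(2)] a] Gm_entry[OF b a] cond
      by (rule cif) (rule key)
  qed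
qed (simp_all add: Lm_def Gm_def OM_def)

lemma R_G: "Rm n * Gm n \<alpha> \<beta> \<delta> = Gm n (Suc \<alpha>) \<beta> (Suc \<delta>) + complex_of_real (real \<beta>) \<cdot>\<^sub>m Gm n (Suc \<alpha>) (\<beta> - 1) \<delta>"
proof (rule eq_matI)
  fix b a assume "b < dim_row (Gm n (Suc \<alpha>) \<beta> (Suc \<delta>) + complex_of_real (real \<beta>) \<cdot>\<^sub>m Gm n (Suc \<alpha>) (\<beta> - 1) \<delta>)"
    "a < dim_col (Gm n (Suc \<alpha>) \<beta> (Suc \<delta>) + complex_of_real (real \<beta>) \<cdot>\<^sub>m Gm n (Suc \<alpha>) (\<beta> - 1) \<delta>)"
  then have b: "b \<le> n" and a: "a \<le> n" by (auto simp: Gm_def OM_def)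
  have lhs: "(Rm n * Gm n \<alpha> \<beta> \<delta>) $$ (b, a) = (if b + 1 < Suc n then complex_of_real (real (n - b)) * Gm n \<alpha> \<beta> \<delta> $$ (b + 1, a) else 0)"
    using mult_single[of "Rm n" "Suc n" "Gm n \<alpha> \<beta> \<delta>" b a "b + 1" "complex_of_real (real (n - b))"] a b
    by (simp add: Rm_def)
  have rhs: "(Gm n (Suc \<alpha>) \<beta> (Suc \<delta>) + complex_of_real (real \<beta>) \<cdot>\<^sub>m Gm n (Suc \<alpha>) (\<beta> - 1) \<delta>) $$ (b, a)
     = Gm n (Suc \<alpha>) \<beta> (Suc \<delta>) $$ (b, a) + complex_of_real (real \<beta>) * Gm n (Suc \<alpha>) (\<beta> - 1) \<delta> $$ (b, a)"
    using a b by (simp add: Gm_def OM_def)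
  show "(Rm n * Gm n \<alpha> \<beta> \<delta>) $$ (b, a) =
    (Gm n (Suc \<alpha>) \<beta> (Suc \<delta>) + complex_of_real (real \<beta>) \<cdot>\<^sub>m Gm n (Suc \<alpha>) (\<beta> - 1) \<delta>) $$ (b, a)"
    unfolding lhs rhs
  proof (cases "b = n")
    case True
    then show "(if b + 1 < Suc n then complex_of_real (real (n - b)) * Gm n \<alpha> \<beta> \<delta> $$ (b + 1, a) else 0) =
      Gm n (Suc \<alpha>) \<beta> (Suc \<delta>) $$ (b, a) + complex_of_real (real \<beta>) * Gm n (Suc \<alpha>) (\<beta> - 1) \<delta> $$ (b, a)"
      using a b by (simp add: Gm_entry ff_zero_Suc)
  next
    case False
    then have bn: "b + 1 \<le> n" using b by simp
    have ce: "int (b + 1) + (int \<delta> - int \<beta>) = int b + (int (Suc \<delta>) - int \<beta>)" by simp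
    have cond: "(int a = int (b + 1) + (int \<delta> - int \<beta>)) = (int a = int b + (int (Suc \<delta>) - int \<beta>))"
      unfolding ce ..
    have e: "real (n - b) - 1 = real (n - (b + 1))" using bn by simp
    have h1: "ff (real (n - b)) (Suc \<alpha>) = real (n - b) * ff (real (n - (b + 1))) \<alpha>"
      by (simp only: ff_Suc' e)
    have h2: "ff (real (b + 1)) \<beta> = ff (real b) \<beta> + real \<beta> * ff (real b) (\<beta> - 1)"
      using ff_pascal[of "real b" \<beta>] by (simp add: add.commute)
    have key: "real (n - b) * (ff (real (n - (b + 1))) \<alpha> * ff (real (b + 1)) \<beta>) =
       ff (real (n - b)) (Suc \<alpha>) * ff (real b) \<beta> + real \<beta> * (ff (real (n - b)) (Suc \<alpha>) * ff (real b) (\<beta> - 1))"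
      unfolding h1 h2 by (simp add: algebra_simps)
    show "(if b + 1 < Suc n then complex_of_real (real (n - b)) * Gm n \<alpha> \<beta> \<delta> $$ (b + 1, a) else 0) =
      Gm n (Suc \<alpha>) \<beta> (Suc \<delta>) $$ (b, a) + complex_of_real (real \<beta>) * Gm n (Suc \<alpha>) (\<beta> - 1) \<delta> $$ (b, a)"
    proof (cases "\<beta> = 0")
      case True
      have key0: "real (n - b) * (ff (real (n - (b + 1))) \<alpha> * ff (real (b + 1)) \<beta>) =
         ff (real (n - b)) (Suc \<alpha>) * ff (real b) \<beta>" using key True by simp
      have z: "complex_of_real (real \<beta>) = complex_of_real 0" using True by simp
      show ?thesis unfolding Gm_entry[OF bn a] Gm_entry[OF b a] cond z using bn
        by (simp only: if_True less_Suc_eq_le) (rule cif0, rule key0)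
    next
      case False
      then have ce2: "int b + (int \<delta> - int (\<beta> - 1)) = int b + (int (Suc \<delta>) - int \<beta>)"
        by simp
      have cond2: "(int a = int b + (int \<delta> - int (\<beta> - 1))) = (int a = int b + (int (Suc \<delta>) - int \<beta>))"
        unfolding ce2 ..
      show ?thesis unfolding Gm_entry[OF bn a] Gm_entry[OF b a] cond cond2 using bn
        by (simp only: if_True less_Suc_eq_le) (rule cif, rule key)
    qed
  qed
qed (simp_all add: Rm_def Gm_def OM_def)

lemma N_G: "Nm n * Gm n \<alpha> \<beta> \<delta> = Gm n \<alpha> (Suc \<beta>) (Suc \<delta>) + complex_of_real (real \<beta>) \<cdot>\<^sub>m Gm n \<alpha> \<beta> \<delta>"
proof (rule eq_matI)
  fix b a assume "b < dim_row (Gm n \<alpha> (Suc \<beta>) (Suc \<delta>) + complex_of_real (real \<beta>) \<cdot>\<^sub>m Gm n \<alpha> \<beta> \<delta>)"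
    "a < dim_col (Gm n \<alpha> (Suc \<beta>) (Suc \<delta>) + complex_of_real (real \<beta>) \<cdot>\<^sub>m Gm n \<alpha> \<beta> \<delta>)"
  then have b: "b \<le> n" and a: "a \<le> n" by (auto simp: Gm_def OM_def)
  have lhs: "(Nm n * Gm n \<alpha> \<beta> \<delta>) $$ (b, a) = complex_of_real (real b) * Gm n \<alpha> \<beta> \<delta> $$ (b, a)"
    using mult_single[of "Nm n" "Suc n" "Gm n \<alpha> \<beta> \<delta>" b a b "complex_of_real (real b)"] a b
    by (simp add: Nm_def)
  have rhs: "(Gm n \<alpha> (Suc \<beta>) (Suc \<delta>) + complex_of_real (real \<beta>) \<cdot>\<^sub>m Gm n \<alpha> \<beta> \<delta>) $$ (b, a)
     = Gm n \<alpha> (Suc \<beta>) (Suc \<delta>) $$ (b, a) + complex_of_real (real \<beta>) * Gm n \<alpha> \<beta> \<delta> $$ (b, a)"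
    using a b by (simp add: Gm_def OM_def)
  have cond: "(int a = int b + (int (Suc \<delta>) - int (Suc \<beta>))) = (int a = int b + (int \<delta> - int \<beta>))" by simp
  have key: "real b * (ff (real (n - b)) \<alpha> * ff (real b) \<beta>) =
     ff (real (n - b)) \<alpha> * ff (real b) (Suc \<beta>) + real \<beta> * (ff (real (n - b)) \<alpha> * ff (real b) \<beta>)"
    by (simp add: ff_Suc algebra_simps)
  show "(Nm n * Gm n \<alpha> \<beta> \<delta>) $$ (b, a) = (Gm n \<alpha> (Suc \<beta>) (Suc \<delta>) + complex_of_real (real \<beta>) \<cdot>\<^sub>m Gm n \<alpha> \<beta> \<delta>) $$ (b, a)"
    unfolding lhs rhs Gm_entry[OF b a] cond by (rule cif) (rule key)
qed (simp_all add: Nm_def Gm_def OM_def)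

lemma lin_mono: "lin n w A \<Longrightarrow> w \<le> w' \<Longrightarrow> lin n w' A"
proof (induction arbitrary: w' rule: lin.induct)
  case (G \<alpha> \<beta> w \<delta>) then show ?case by (intro lin.G) auto
next
  case (add w A B) then show ?case by (auto intro: lin.add)
next
  case (smult w A c) then show ?case by (auto intro: lin.smult)
qed

lemma lin_left:
  assumes M: "M \<in> carrier_mat (n + 1) (n + 1)"
    and base: "\<And>\<alpha> \<beta> \<delta> w. \<alpha> + \<beta> \<le> w \<Longrightarrow> \<delta> \<le> \<alpha> + \<beta> \<Longrightarrow> lin n (Suc w) (M * Gm n \<alpha> \<beta> \<delta>)"
  shows "lin n w A \<Longrightarrow> lin n (Suc w) (M * A)"
proof (induction rule: lin.induct)
  case (G \<alpha> \<beta> w \<delta>) then show ?case by (rule base)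
next
  case (add w A B)
  have "A \<in> carrier_mat (n + 1) (n + 1)" "B \<in> carrier_mat (n + 1) (n + 1)" using add.hyps lin_carrier by auto
  then have "M * (A + B) = M * A + M * B" using M by (simp add: mult_add_distrib_mat)
  then show ?case using add.IH by (simp add: lin.add)
next
  case (smult w A c)
  have "A \<in> carrier_mat (n + 1) (n + 1)" using smult.hyps lin_carrier by auto
  then have "M * (c \<cdot>\<^sub>m A) = c \<cdot>\<^sub>m (M * A)" using M by (simp add: mult_smult_distrib)
  then show ?case using smult.IH by (simp add: lin.smult)
qed

lemma lin_L: "lin n w A \<Longrightarrow> lin n (Suc w) (Lm n * A)"
proof (rule lin_left)
  fix \<alpha> \<beta> \<delta> w :: nat assume h: "\<alpha> + \<beta> \<le> w" "\<delta> \<le> \<alpha> + \<beta>"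
  show "lin n (Suc w) (Lm n * Gm n \<alpha> \<beta> \<delta>)" unfolding L_G
    by (intro lin.add lin.smult lin.G) (use h in auto)
qed simp

lemma lin_R: "lin n w A \<Longrightarrow> lin n (Suc w) (Rm n * A)"
proof (rule lin_left)
  fix \<alpha> \<beta> \<delta> w :: nat assume h: "\<alpha> + \<beta> \<le> w" "\<delta> \<le> \<alpha> + \<beta>"
  show "lin n (Suc w) (Rm n * Gm n \<alpha> \<beta> \<delta>)" unfolding R_G
    by (intro lin.add lin.smult lin.G) (use h in auto)
qed simp

lemma lin_N: "lin n w A \<Longrightarrow> lin n (Suc w) (Nm n * A)"
proof (rule lin_left)
  fix \<alpha> \<beta> \<delta> w :: nat assume h: "\<alpha> + \<beta> \<le> w" "\<delta> \<le> \<alpha> + \<beta>"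
  show "lin n (Suc w) (Nm n * Gm n \<alpha> \<beta> \<delta>)" unfolding N_G
    by (intro lin.add lin.smult lin.G) (use h in auto)
qed simp

lemma lin_one: "lin n 0 (1\<^sub>m (n + 1))"
proof -
  have "Gm n 0 0 0 = 1\<^sub>m (n + 1)"
    by (rule eq_matI) (auto simp: Gm_def OM_def)
  moreover have "lin n 0 (Gm n 0 0 0)" by (rule lin.G) auto
  ultimately show ?thesis by simp
qed




lemma bit_lt_exp: "(u::nat) < 2 ^ n \<Longrightarrow> bit u i \<Longrightarrow> i < n"
proof -
  assume u: "u < 2 ^ n" and b: "bit u i"
  have "take_bit n u = u" using u by (simp add: take_bit_nat_eq_self_iff)
  then have "bit (take_bit n u) i" using b by simp
  then show "i < n" by (simp add: bit_take_bit_iff)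
qed

lemma bits_lt_exp: "(\<And>i. bit (u::nat) i \<Longrightarrow> i < n) \<Longrightarrow> u < 2 ^ n"
proof -
  assume h: "\<And>i. bit (u::nat) i \<Longrightarrow> i < n"
  have "take_bit n u = u" by (rule bit_eq_iff[THEN iffD2]) (use h in \<open>auto simp: bit_take_bit_iff\<close>)
  then show ?thesis using take_bit_nat_less_exp[of n u] by simp
qed

lemma bits_eq: "(u::nat) < 2 ^ n \<Longrightarrow> v < 2 ^ n \<Longrightarrow> (\<And>i. i < n \<Longrightarrow> bit u i = bit v i) \<Longrightarrow> u = v"
  by (rule bit_eq_iff[THEN iffD2]) (meson bit_lt_exp)

definition mk :: "nat \<Rightarrow> (nat \<Rightarrow> bool) \<Rightarrow> nat" where
  "mk n g = horner_sum of_bool 2 (map g [0..<n])"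

lemma mk_lt: "mk n g < 2 ^ n"
  unfolding mk_def using horner_sum_bound[of "map g [0..<n]"] by simp

lemma bit_mk: "i < n \<Longrightarrow> bit (mk n g) i = g i"
  unfolding mk_def by (simp add: bit_horner_sum_bit_iff)

lemma flip_lt: "(x::nat) < 2 ^ n \<Longrightarrow> j < n \<Longrightarrow> flip_bit j x < 2 ^ n"
  by (rule bits_lt_exp) (auto simp: bit_flip_bit_iff dest: bit_lt_exp split: if_splits)

lemma bit_flip_same: "bit (flip_bit j (x::nat)) j = (\<not> bit x j)"
  by (simp add: bit_flip_bit_iff)

lemma bit_flip_other: "i \<noteq> j \<Longrightarrow> bit (flip_bit j (x::nat)) i = bit x i"
  by (auto simp: bit_flip_bit_iff)

lemma hw_le: "hamming_weight n x \<le> n"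
  unfolding hamming_weight_def by (rule le_trans[OF card_mono[of "{..<n}"]]) auto

lemma hw_flip:
  assumes "j < n"
  shows "hamming_weight n (flip_bit j x) = (if bit x j then hamming_weight n x - 1 else hamming_weight n x + 1)"
proof -
  define S where "S = {i. i < n \<and> bit x i}"
  have fS: "finite S" unfolding S_def by simp
  have eq: "{i. i < n \<and> bit (flip_bit j x) i} = (if bit x j then S - {j} else insert j S)"
    unfolding S_def using assms by (auto simp: bit_flip_bit_iff)
  show ?thesis
  proof (cases "bit x j")
    case True
    then have "j \<in> S" unfolding S_def using assms by simp
    then show ?thesis unfolding hamming_weight_def S_def[symmetric] eq using True fS by simp
  next
    case False
    then have "j \<notin> S" unfolding S_def by simp
    then show ?thesis unfolding hamming_weight_def S_def[symmetric] eq using False fS by simp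
  qed
qed

lemma card_not_bits: "card {l. l < n \<and> \<not> bit x l} = n - hamming_weight n x"
proof -
  have "{l. l < n \<and> \<not> bit x l} = {..<n} - {l. l < n \<and> bit x l}" by auto
  moreover have "card ({..<n} - {l. l < n \<and> bit x l}) = n - card {l. l < n \<and> bit x l}"
    by (subst card_Diff_subset) auto
  ultimately show ?thesis unfolding hamming_weight_def by simp
qed

lemma card_hw: "card {x. x < 2 ^ n \<and> hamming_weight n x = a} = n choose a"
proof -
  have bij: "bij_betw (\<lambda>x. {i. i < n \<and> bit x i}) {x. x < 2 ^ n \<and> hamming_weight n x = a}
     {S. S \<subseteq> {..<n} \<and> card S = a}"
  proof (rule bij_betw_byWitness[where f' = "\<lambda>S. mk n (\<lambda>i. i \<in> S)"])
    show "\<forall>x\<in>{x. x < 2 ^ n \<and> hamming_weight n x = a}. mk n (\<lambda>i. i \<in> {i. i < n \<and> bit x i}) = x"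
      by (auto intro!: bits_eq mk_lt simp: bit_mk)
    show "\<forall>S\<in>{S. S \<subseteq> {..<n} \<and> card S = a}. {i. i < n \<and> bit (mk n (\<lambda>i. i \<in> S)) i} = S"
      by (auto simp: bit_mk)
    show "(\<lambda>x. {i. i < n \<and> bit x i}) ` {x. x < 2 ^ n \<and> hamming_weight n x = a} \<subseteq> {S. S \<subseteq> {..<n} \<and> card S = a}"
      by (auto simp: hamming_weight_def)
    have "{i. i < n \<and> bit (mk n (\<lambda>i. i \<in> S)) i} = S" if "S \<subseteq> {..<n}" for S
      using that by (auto simp: bit_mk)
    then show "(\<lambda>S. mk n (\<lambda>i. i \<in> S)) ` {S. S \<subseteq> {..<n} \<and> card S = a} \<subseteq> {x. x < 2 ^ n \<and> hamming_weight n x = a}"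
      by (auto simp: mk_lt hamming_weight_def)
  qed
  have "card {S. S \<subseteq> {..<n} \<and> card S = a} = n choose a"
    using n_subsets[of "{..<n}" a] by simp
  then show ?thesis using bij_betw_same_card[OF bij] by simp
qed

definition single :: "nat \<Rightarrow> nat \<Rightarrow> nat \<Rightarrow> nat" where
  "single j s = (\<lambda>i. if i = j then s else 0)"

lemma pauli_single_entry:
  assumes "j < n" "x < 2 ^ n" "y < 2 ^ n"
  shows "pauli n (single j s) $$ (x, y) = pauli1 s (bit x j) (bit y j) *
     (if (\<forall>i<n. i \<noteq> j \<longrightarrow> bit x i = bit y i) then 1 else 0)"
proof -
  have "pauli n (single j s) $$ (x, y) = (\<Prod>i<n. pauli1 (single j s i) (bit x i) (bit y i))"
    unfolding pauli_def using assms by simp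
  also have "\<dots> = pauli1 s (bit x j) (bit y j) * (\<Prod>i\<in>{..<n} - {j}. pauli1 (single j s i) (bit x i) (bit y i))"
    using assms(1) by (simp add: prod.remove single_def)
  also have "(\<Prod>i\<in>{..<n} - {j}. pauli1 (single j s i) (bit x i) (bit y i)) =
      (\<Prod>i\<in>{..<n} - {j}. if bit x i = bit y i then 1 else 0)"
    by (rule prod.cong) (auto simp: single_def pauli1_def)
  also have "\<dots> = (if (\<forall>i<n. i \<noteq> j \<longrightarrow> bit x i = bit y i) then 1 else 0)"
  proof (cases "\<forall>i<n. i \<noteq> j \<longrightarrow> bit x i = bit y i")
    case True then show ?thesis by (auto intro: prod.neutral)
  next
    case False
    then obtain i where "i < n" "i \<noteq> j" "bit x i \<noteq> bit y i" by auto
    then show ?thesis using False by (intro trans[OF prod_zero]) auto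
  qed
  finally show ?thesis .
qed

lemma pauli_single_rowsum:
  assumes j: "j < n" and x: "x < 2 ^ n"
  shows "(\<Sum>y<2 ^ n. pauli n (single j s) $$ (x, y) * F y) =
    pauli1 s (bit x j) (bit x j) * F x + pauli1 s (bit x j) (\<not> bit x j) * F (flip_bit j x)"
proof -
  define x' where "x' = flip_bit j (x::nat)"
  have x'lt: "x' < 2 ^ n" unfolding x'_def by (rule flip_lt[OF x j])
  have ne: "x \<noteq> x'" unfolding x'_def using bit_flip_same[of j x] by auto
  have zero: "pauli n (single j s) $$ (x, y) * F y = 0" if "y \<in> {..<2 ^ n} - {x, x'}" for y
  proof -
    have y: "y < 2 ^ n" "y \<noteq> x" "y \<noteq> x'" using that by auto
    have "\<not> (\<forall>i<n. i \<noteq> j \<longrightarrow> bit x i = bit y i)"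
    proof
      assume h: "\<forall>i<n. i \<noteq> j \<longrightarrow> bit x i = bit y i"
      show False
      proof (cases "bit y j = bit x j")
        case True
        then have "y = x" using h by (intro bits_eq[OF y(1) x]) (metis)
        then show False using y by simp
      next
        case False
        then have "y = x'" using h unfolding x'_def
          by (intro bits_eq[OF y(1) flip_lt[OF x j]]) (metis bit_flip_same bit_flip_other)
        then show False using y by simp
      qed
    qed
    then show ?thesis unfolding pauli_single_entry[OF j x y(1)] by (simp only: if_False mult_zero_right mult_zero_left)
  qed
  have "(\<Sum>y<2 ^ n. pauli n (single j s) $$ (x, y) * F y) = (\<Sum>y\<in>{x, x'}. pauli n (single j s) $$ (x, y) * F y)"
    by (rule sum.mono_neutral_right) (use x x'lt zero in auto)
  also have "\<dots> = pauli n (single j s) $$ (x, x) * F x + pauli n (single j s) $$ (x, x') * F x'"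
    using ne by simp
  also have "pauli n (single j s) $$ (x, x) = pauli1 s (bit x j) (bit x j)"
    unfolding pauli_single_entry[OF j x x] by simp
  also have "pauli n (single j s) $$ (x, x') = pauli1 s (bit x j) (\<not> bit x j)"
    unfolding pauli_single_entry[OF j x x'lt] unfolding x'_def
    by (simp add: bit_flip_same bit_flip_other)
  finally show ?thesis unfolding x'_def .
qed

section \<open>Counting permutations\<close>

lemma card_perm_fix:
  assumes "j < n"
  shows "card {\<sigma>. \<sigma> permutes {..<n} \<and> \<sigma> j = j} = fact (n - 1)"
proof -
  have "{\<sigma>. \<sigma> permutes {..<n} \<and> \<sigma> j = j} = {\<sigma>. \<sigma> permutes ({..<n} - {j})}"
  proof (rule Set.set_eqI, rule iffI)
    fix \<sigma> assume "\<sigma> \<in> {\<sigma>. \<sigma> permutes {..<n} \<and> \<sigma> j = j}"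
    then have h: "\<sigma> permutes {..<n}" "\<sigma> j = j" by auto
    have "\<forall>x. x \<notin> {..<n} - {j} \<longrightarrow> \<sigma> x = x" using h(2) permutes_not_in[OF h(1)] by blast
    moreover have "\<forall>y. \<exists>!x. \<sigma> x = y" using h(1) unfolding permutes_def by blast
    ultimately have "\<sigma> permutes ({..<n} - {j})" unfolding permutes_def by blast
    then show "\<sigma> \<in> {\<sigma>. \<sigma> permutes ({..<n} - {j})}" by simp
  next
    fix \<sigma> assume "\<sigma> \<in> {\<sigma>. \<sigma> permutes ({..<n} - {j})}"
    then have h: "\<sigma> permutes ({..<n} - {j})" by simp
    have "\<sigma> permutes {..<n}" by (rule permutes_subset[OF h]) blast
    moreover have "\<sigma> j = j" by (rule permutes_not_in[OF h]) simp
    ultimately show "\<sigma> \<in> {\<sigma>. \<sigma> permutes {..<n} \<and> \<sigma> j = j}" by simp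
  qed
  moreover have "card ({..<n} - {j}) = n - 1" using assms by simp
  ultimately show ?thesis using card_permutations[of "{..<n} - {j}" "n - 1"] by simp
qed

lemma card_perm_to:
  assumes "j < n" "l < n"
  shows "card {\<sigma>. \<sigma> permutes {..<n} \<and> \<sigma> j = l} = fact (n - 1)"
proof -
  define \<tau> where "\<tau> = Transposition.transpose j l"
  have \<tau>: "\<tau> permutes {..<n}" unfolding \<tau>_def using assms by (intro permutes_swap_id) auto
  have "bij_betw (\<lambda>\<sigma>. \<tau> \<circ> \<sigma>) {\<sigma>. \<sigma> permutes {..<n} \<and> \<sigma> j = j} {\<sigma>. \<sigma> permutes {..<n} \<and> \<sigma> j = l}"
  proof (rule bij_betw_byWitness[where f' = "\<lambda>\<sigma>. \<tau> \<circ> \<sigma>"])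
    have inv: "\<tau> \<circ> (\<tau> \<circ> a) = a" for a :: "nat \<Rightarrow> nat"
    proof
      fix z show "(\<tau> \<circ> (\<tau> \<circ> a)) z = a z" unfolding \<tau>_def by simp
    qed
    show "\<forall>a\<in>{\<sigma>. \<sigma> permutes {..<n} \<and> \<sigma> j = j}. \<tau> \<circ> (\<tau> \<circ> a) = a" using inv by blast
    show "\<forall>a\<in>{\<sigma>. \<sigma> permutes {..<n} \<and> \<sigma> j = l}. \<tau> \<circ> (\<tau> \<circ> a) = a" using inv by blast
    show "(\<circ>) \<tau> ` {\<sigma>. \<sigma> permutes {..<n} \<and> \<sigma> j = j} \<subseteq> {\<sigma>. \<sigma> permutes {..<n} \<and> \<sigma> j = l}"
    proof
      fix \<rho> assume "\<rho> \<in> (\<circ>) \<tau> ` {\<sigma>. \<sigma> permutes {..<n} \<and> \<sigma> j = j}"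
      then obtain \<sigma> where s: "\<sigma> permutes {..<n}" "\<sigma> j = j" and r: "\<rho> = \<tau> \<circ> \<sigma>" by blast
      have "\<rho> permutes {..<n}" unfolding r by (rule permutes_compose[OF s(1) \<tau>])
      moreover have "\<rho> j = l" unfolding r using s(2) by (simp add: \<tau>_def)
      ultimately show "\<rho> \<in> {\<sigma>. \<sigma> permutes {..<n} \<and> \<sigma> j = l}" by simp
    qed
    show "(\<circ>) \<tau> ` {\<sigma>. \<sigma> permutes {..<n} \<and> \<sigma> j = l} \<subseteq> {\<sigma>. \<sigma> permutes {..<n} \<and> \<sigma> j = j}"
    proof
      fix \<rho> assume "\<rho> \<in> (\<circ>) \<tau> ` {\<sigma>. \<sigma> permutes {..<n} \<and> \<sigma> j = l}"
      then obtain \<sigma> where s: "\<sigma> permutes {..<n}" "\<sigma> j = l" and r: "\<rho> = \<tau> \<circ> \<sigma>" by blast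
      have "\<rho> permutes {..<n}" unfolding r by (rule permutes_compose[OF s(1) \<tau>])
      moreover have "\<rho> j = j" unfolding r using s(2) by (simp add: \<tau>_def)
      ultimately show "\<rho> \<in> {\<sigma>. \<sigma> permutes {..<n} \<and> \<sigma> j = j}" by simp
    qed
  qed
  then have "card {\<sigma>. \<sigma> permutes {..<n} \<and> \<sigma> j = j} = card {\<sigma>. \<sigma> permutes {..<n} \<and> \<sigma> j = l}"
    by (rule bij_betw_same_card)
  then show ?thesis using card_perm_fix[OF assms(1)] by simp
qed

lemma sum_perm_apply:
  fixes F :: "nat \<Rightarrow> complex"
  assumes "j < n"
  shows "(\<Sum>\<sigma>\<in>{\<sigma>. \<sigma> permutes {..<n}}. F (\<sigma> j)) = of_nat (fact (n - 1)) * (\<Sum>l<n. F l)"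
proof -
  have fin: "finite {\<sigma>. \<sigma> permutes {..<n}}" by (rule finite_permutations) simp
  have img: "(\<lambda>\<sigma>. \<sigma> j) ` {\<sigma>. \<sigma> permutes {..<n}} \<subseteq> {..<n}"
  proof
    fix z assume "z \<in> (\<lambda>\<sigma>. \<sigma> j) ` {\<sigma>. \<sigma> permutes {..<n}}"
    then obtain \<sigma> where "\<sigma> permutes {..<n}" "z = \<sigma> j" by blast
    then show "z \<in> {..<n}" using permutes_in_image[of \<sigma> "{..<n}" j] assms by simp
  qed
  have "(\<Sum>\<sigma>\<in>{\<sigma>. \<sigma> permutes {..<n}}. F (\<sigma> j)) =
      (\<Sum>l<n. \<Sum>\<sigma>\<in>{\<sigma> \<in> {\<sigma>. \<sigma> permutes {..<n}}. \<sigma> j = l}. F (\<sigma> j))"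
    using sum.group[OF fin _ img, of "\<lambda>\<sigma>. F (\<sigma> j)"] by simp
  also have "\<dots> = (\<Sum>l<n. of_nat (fact (n - 1)) * F l)"
  proof (rule sum.cong)
    fix l assume l: "l \<in> {..<n}"
    have "(\<Sum>\<sigma>\<in>{\<sigma> \<in> {\<sigma>. \<sigma> permutes {..<n}}. \<sigma> j = l}. F (\<sigma> j)) = (\<Sum>\<sigma>\<in>{\<sigma>. \<sigma> permutes {..<n} \<and> \<sigma> j = l}. F l)"
      by (rule sum.cong) auto
    also have "\<dots> = of_nat (fact (n - 1)) * F l" using card_perm_to[OF assms, of l] l by simp
    finally show "(\<Sum>\<sigma>\<in>{\<sigma> \<in> {\<sigma>. \<sigma> permutes {..<n}}. \<sigma> j = l}. F (\<sigma> j)) = of_nat (fact (n - 1)) * F l" .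
  qed simp
  finally show ?thesis by (simp add: sum_distrib_left)
qed

lemma mult_single_r:
  assumes A: "A \<in> carrier_mat NR N" and B: "B \<in> carrier_mat N NC" and b: "b < NR" and a: "a < NC"
    and row: "\<And>c. c < N \<Longrightarrow> A $$ (b, c) = (if c = s then x else 0)"
  shows "(A * B) $$ (b, a) = (if s < N then x * B $$ (s, a) else 0)"
proof -
  have "(A * B) $$ (b, a) = (\<Sum>c\<in>{0..<N}. A $$ (b, c) * B $$ (c, a))"
    using A B a b by (simp add: scalar_prod_def)
  also have "\<dots> = (\<Sum>c\<in>{0..<N}. if c = s then x * B $$ (s, a) else 0)"
    by (rule sum.cong) (auto simp: row)
  also have "\<dots> = (if s < N then x * B $$ (s, a) else 0)" by simp
  finally show ?thesis .
qed

lemma mult_single_c: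
  assumes A: "A \<in> carrier_mat NR N" and B: "B \<in> carrier_mat N NC" and b: "b < NR" and a: "a < NC"
    and col: "\<And>c. c < N \<Longrightarrow> B $$ (c, a) = (if c = s then x else 0)"
  shows "(A * B) $$ (b, a) = (if s < N then A $$ (b, s) * x else 0)"
proof -
  have "(A * B) $$ (b, a) = (\<Sum>c\<in>{0..<N}. A $$ (b, c) * B $$ (c, a))"
    using A B a b by (simp add: scalar_prod_def)
  also have "\<dots> = (\<Sum>c\<in>{0..<N}. if c = s then A $$ (b, s) * x else 0)"
    by (rule sum.cong) (auto simp: col)
  also have "\<dots> = (if s < N then A $$ (b, s) * x else 0)" by simp
  finally show ?thesis .
qed

lemma adjoint_carrier: "A \<in> carrier_mat nr nc \<Longrightarrow> mat_adjoint A \<in> carrier_mat nc nr"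
  unfolding mat_adjoint_def by auto

lemma adjoint_index: "i < dim_col A \<Longrightarrow> j < dim_row A \<Longrightarrow> mat_adjoint A $$ (i, j) = cnj (A $$ (j, i))"
  unfolding mat_adjoint_def by (simp add: mat_of_rows_index)

definition pb :: "nat \<Rightarrow> (nat \<Rightarrow> nat) \<Rightarrow> nat \<Rightarrow> nat" where
  "pb n \<sigma> x = mk n (\<lambda>i. bit x (\<sigma> i))"

lemma perm_mat_entry:
  assumes "u < 2 ^ n" "x < 2 ^ n"
  shows "perm_mat n \<sigma> $$ (u, x) = (if u = pb n \<sigma> x then 1 else 0)"
proof -
  have "(\<forall>i<n. bit u i = bit x (\<sigma> i)) = (u = pb n \<sigma> x)"
  proof
    assume "\<forall>i<n. bit u i = bit x (\<sigma> i)"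
    then show "u = pb n \<sigma> x" unfolding pb_def by (intro bits_eq[OF assms(1) mk_lt]) (simp add: bit_mk)
  next
    assume "u = pb n \<sigma> x"
    then show "\<forall>i<n. bit u i = bit x (\<sigma> i)" unfolding pb_def by (simp add: bit_mk)
  qed
  then show ?thesis unfolding perm_mat_def using assms by simp
qed

lemma perm_mat_carrier[simp]: "perm_mat n \<sigma> \<in> carrier_mat (2 ^ n) (2 ^ n)"
  by (simp add: perm_mat_def)

lemma pauli_carrier[simp]: "pauli n p \<in> carrier_mat (2 ^ n) (2 ^ n)"
  by (simp add: pauli_def)

lemma pb_lt: "pb n \<sigma> x < 2 ^ n" unfolding pb_def by (rule mk_lt)

lemma conj_entry:
  assumes x: "x < 2 ^ n" and y: "y < 2 ^ n" and A: "A \<in> carrier_mat (2 ^ n) (2 ^ n)"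
  shows "(mat_adjoint (perm_mat n \<sigma>) * A * perm_mat n \<sigma>) $$ (x, y) = A $$ (pb n \<sigma> x, pb n \<sigma> y)"
proof -
  have PA: "mat_adjoint (perm_mat n \<sigma>) * A \<in> carrier_mat (2 ^ n) (2 ^ n)"
    by (rule mult_carrier_mat[OF adjoint_carrier[OF perm_mat_carrier[of n \<sigma>]] A])
  have "(mat_adjoint (perm_mat n \<sigma>) * A * perm_mat n \<sigma>) $$ (x, y) =
      (mat_adjoint (perm_mat n \<sigma>) * A) $$ (x, pb n \<sigma> y) * 1"
    using mult_single_c[OF PA perm_mat_carrier[of n \<sigma>] x y, where s = "pb n \<sigma> y" and x = 1] perm_mat_entry[OF _ y] pb_lt by simp
  also have "(mat_adjoint (perm_mat n \<sigma>) * A) $$ (x, pb n \<sigma> y) = 1 * A $$ (pb n \<sigma> x, pb n \<sigma> y)"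
  proof -
    have row: "mat_adjoint (perm_mat n \<sigma>) $$ (x, c) = (if c = pb n \<sigma> x then 1 else 0)" if "c < 2 ^ n" for c
      using adjoint_index[of x "perm_mat n \<sigma>" c] that x perm_mat_entry[OF that x] by (simp add: perm_mat_def)
    show ?thesis using mult_single_r[OF adjoint_carrier[OF perm_mat_carrier] A x pb_lt row] pb_lt by simp
  qed
  finally show ?thesis by simp
qed

lemma conj_pauli_entry:
  assumes \<sigma>: "\<sigma> permutes {..<n}" and j: "j < n" and x: "x < 2 ^ n" and y: "y < 2 ^ n"
  shows "(mat_adjoint (perm_mat n \<sigma>) * pauli n (single j s) * perm_mat n \<sigma>) $$ (x, y) =
    pauli n (single (\<sigma> j) s) $$ (x, y)"
proof -
  have sj: "\<sigma> j < n" using permutes_in_image[OF \<sigma>, of j] j by simp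
  have bx: "bit (pb n \<sigma> x) i = bit x (\<sigma> i)" and bY: "bit (pb n \<sigma> y) i = bit y (\<sigma> i)" if "i < n" for i
    unfolding pb_def using that by (simp_all add: bit_mk)
  have iff: "(\<forall>i<n. i \<noteq> j \<longrightarrow> bit (pb n \<sigma> x) i = bit (pb n \<sigma> y) i) = (\<forall>l<n. l \<noteq> \<sigma> j \<longrightarrow> bit x l = bit y l)"
  proof
    assume h: "\<forall>i<n. i \<noteq> j \<longrightarrow> bit (pb n \<sigma> x) i = bit (pb n \<sigma> y) i"
    show "\<forall>l<n. l \<noteq> \<sigma> j \<longrightarrow> bit x l = bit y l"
    proof (intro allI impI)
      fix l assume l: "l < n" "l \<noteq> \<sigma> j"
      define i where "i = Hilbert_Choice.inv \<sigma> l"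
      have li: "\<sigma> i = l" unfolding i_def using permutes_inverses(1)[OF \<sigma>] by simp
      have "i < n" using permutes_in_image[OF \<sigma>, of i] li l by simp
      moreover have "i \<noteq> j" using li l by auto
      ultimately have "bit (pb n \<sigma> x) i = bit (pb n \<sigma> y) i" using h by blast
      then show "bit x l = bit y l" using bx[OF \<open>i < n\<close>] bY[OF \<open>i < n\<close>] li by simp
    qed
  next
    assume h: "\<forall>l<n. l \<noteq> \<sigma> j \<longrightarrow> bit x l = bit y l"
    show "\<forall>i<n. i \<noteq> j \<longrightarrow> bit (pb n \<sigma> x) i = bit (pb n \<sigma> y) i"
    proof (intro allI impI)
      fix i assume i: "i < n" "i \<noteq> j"
      have "\<sigma> i < n" using permutes_in_image[OF \<sigma>, of i] i by simp
      moreover have "\<sigma> i \<noteq> \<sigma> j" using i permutes_inj[OF \<sigma>] by (auto dest: injD)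
      ultimately have "bit x (\<sigma> i) = bit y (\<sigma> i)" using h by blast
      then show "bit (pb n \<sigma> x) i = bit (pb n \<sigma> y) i" using bx[OF i(1)] bY[OF i(1)] by simp
    qed
  qed
  show ?thesis unfolding conj_entry[OF x y pauli_carrier] pauli_single_entry[OF j pb_lt pb_lt]
    pauli_single_entry[OF sj x y] iff using bx[OF j] bY[OF j] by simp
qed

section \<open>Sym of a single-qubit Pauli\<close>

definition Em :: "nat \<Rightarrow> complex mat" where
  "Em n = mat (2 ^ n) (n + 1) (\<lambda>(x, a). if hamming_weight n x = a then 1 else 0)"

lemma Em_carrier[simp]: "Em n \<in> carrier_mat (2 ^ n) (n + 1)" by (simp add: Em_def)
lemma Em_dims[simp]: "dim_row (Em n) = 2 ^ n" "dim_col (Em n) = n + 1" by (simp_all add: Em_def)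

definition Jm :: "nat \<Rightarrow> nat \<Rightarrow> complex mat" where
  "Jm n s = (if s = 1 then Lm n + Rm n else if s = 2 then \<i> \<cdot>\<^sub>m Lm n + (- \<i>) \<cdot>\<^sub>m Rm n
     else of_nat n \<cdot>\<^sub>m 1\<^sub>m (n + 1) + (- 2) \<cdot>\<^sub>m Nm n)"

lemma Jm_carrier[simp]: "Jm n s \<in> carrier_mat (n + 1) (n + 1)"
  by (simp add: Jm_def)

lemma Jm_dims[simp]: "dim_row (Jm n s) = n + 1" "dim_col (Jm n s) = n + 1"
  using Jm_carrier[of n s] by auto

lemma Jm_entry:
  assumes "b \<le> n" "a \<le> n" "s \<in> {1, 2, 3}"
  shows "Jm n s $$ (b, a) =
     of_nat b * (pauli1 s True True * (if b = a then 1 else 0) + pauli1 s True False * (if b - 1 = a then 1 else 0))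
   + of_nat (n - b) * (pauli1 s False False * (if b = a then 1 else 0) + pauli1 s False True * (if b + 1 = a then 1 else 0))"
  using assms by (auto simp: Jm_def Lm_def Rm_def Nm_def pauli1_def of_nat_diff algebra_simps)

lemma sum_if_bits:
  fixes A B :: complex
  shows "(\<Sum>l<n. if bit x l then A else B) = of_nat (hamming_weight n x) * A + of_nat (n - hamming_weight n x) * B"
proof -
  have "(\<Sum>l<n. if bit x l then A else B) = sum (\<lambda>_. A) ({..<n} \<inter> {l. bit x l}) + sum (\<lambda>_. B) ({..<n} \<inter> - {l. bit x l})"
    by (rule sum.If_cases) simp
  moreover have "{..<n} \<inter> {l. bit x l} = {i. i < n \<and> bit x i}" by auto
  moreover have "{..<n} \<inter> - {l. bit x l} = {l. l < n \<and> \<not> bit x l}" by auto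
  ultimately show ?thesis unfolding hamming_weight_def using card_not_bits[of n x, unfolded hamming_weight_def]
    by simp
qed

lemma Sym_single_Em:
  assumes j: "j < n" and s: "s \<in> {1, 2, 3}"
  shows "Sym n (pauli n (single j s)) * Em n = Em n * ((1 / of_nat n) \<cdot>\<^sub>m Jm n s)"
proof (rule eq_matI)
  show "dim_row (Sym n (pauli n (single j s)) * Em n) = dim_row (Em n * ((1 / of_nat n) \<cdot>\<^sub>m Jm n s))"
    by (simp add: Sym_def Em_def)
  show "dim_col (Sym n (pauli n (single j s)) * Em n) = dim_col (Em n * ((1 / of_nat n) \<cdot>\<^sub>m Jm n s))"
    by (simp add: Em_def)
  fix x a assume "x < dim_row (Em n * ((1 / of_nat n) \<cdot>\<^sub>m Jm n s))" "a < dim_col (Em n * ((1 / of_nat n) \<cdot>\<^sub>m Jm n s))"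
  then have x: "x < 2 ^ n" and a: "a < n + 1" by (simp_all add: Em_def)
  define P where "P = {\<sigma>. \<sigma> permutes {..<n}}"
  define G where "G = (\<lambda>l. pauli1 s (bit x l) (bit x l) * (if hamming_weight n x = a then 1 else 0)
      + pauli1 s (bit x l) (\<not> bit x l) * (if hamming_weight n (flip_bit l x) = a then 1 else 0))"
  have symE: "Sym n (pauli n (single j s)) $$ (x, y) = (1 / fact n) * (\<Sum>\<sigma>\<in>P. pauli n (single (\<sigma> j) s) $$ (x, y))"
    if y: "y < 2 ^ n" for y
    unfolding Sym_def P_def using x y
    by (simp add: conj_pauli_entry[OF _ j x y])
  have "(Sym n (pauli n (single j s)) * Em n) $$ (x, a) =
      (\<Sum>y\<in>{0..<2 ^ n}. Sym n (pauli n (single j s)) $$ (x, y) * Em n $$ (y, a))"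
    using x a by (simp add: scalar_prod_def Sym_def Em_def)
  also have "\<dots> = (\<Sum>y<2 ^ n. (1 / fact n) * (\<Sum>\<sigma>\<in>P. pauli n (single (\<sigma> j) s) $$ (x, y) * Em n $$ (y, a)))"
    unfolding atLeast0LessThan by (rule sum.cong) (simp_all add: symE sum_distrib_right)
  also have "\<dots> = (1 / fact n) * (\<Sum>\<sigma>\<in>P. \<Sum>y<2 ^ n. pauli n (single (\<sigma> j) s) $$ (x, y) * Em n $$ (y, a))"
    by (simp add: sum_distrib_left sum.swap[of _ P])
  also have "\<dots> = (1 / fact n) * (\<Sum>\<sigma>\<in>P. G (\<sigma> j))"
  proof -
    have "(\<Sum>y<2 ^ n. pauli n (single (\<sigma> j) s) $$ (x, y) * Em n $$ (y, a)) = G (\<sigma> j)" if "\<sigma> \<in> P" for \<sigma>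
    proof -
      have sj: "\<sigma> j < n" using that permutes_in_image[of \<sigma> "{..<n}" j] j unfolding P_def by simp
      have "(\<Sum>y<2 ^ n. pauli n (single (\<sigma> j) s) $$ (x, y) * Em n $$ (y, a)) =
         (\<Sum>y<2 ^ n. pauli n (single (\<sigma> j) s) $$ (x, y) * (if hamming_weight n y = a then 1 else 0))"
        by (rule sum.cong) (use a in \<open>simp_all add: Em_def\<close>)
      also have "\<dots> = G (\<sigma> j)" unfolding G_def by (rule pauli_single_rowsum[OF sj x])
      finally show ?thesis .
    qed
    then show ?thesis by simp
  qed
  also have "\<dots> = (1 / fact n) * (of_nat (fact (n - 1)) * (\<Sum>l<n. G l))"
    unfolding P_def by (simp add: sum_perm_apply[OF j])
  also have "(\<Sum>l<n. G l) = (\<Sum>l<n. if bit x l then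
        pauli1 s True True * (if hamming_weight n x = a then 1 else 0) + pauli1 s True False * (if hamming_weight n x - 1 = a then 1 else 0)
      else pauli1 s False False * (if hamming_weight n x = a then 1 else 0) + pauli1 s False True * (if hamming_weight n x + 1 = a then 1 else 0))"
    by (rule sum.cong) (simp_all add: G_def hw_flip)
  also have "\<dots> = Jm n s $$ (hamming_weight n x, a)"
    unfolding sum_if_bits by (rule Jm_entry[OF hw_le _ s, symmetric]) (use a in simp)
  also have "(1 / fact n) * (of_nat (fact (n - 1)) * Jm n s $$ (hamming_weight n x, a)) =
      (1 / of_nat n) * Jm n s $$ (hamming_weight n x, a)"
  proof -
    obtain m where m: "n = Suc m" using j by (cases n) auto
    have gen: "(A::complex) \<noteq> 0 \<Longrightarrow> B \<noteq> 0 \<Longrightarrow> 1 / (A * B) * B = 1 / A" for A B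
      by (simp add: field_simps)
    have fe: "(fact n :: complex) = of_nat (Suc m) * of_nat (fact m)"
      unfolding m by (metis fact_Suc of_nat_fact)
    have A0: "(of_nat (Suc m) :: complex) \<noteq> 0" by (rule of_nat_neq_0)
    have B0: "(of_nat (fact m) :: complex) \<noteq> 0" by simp
    have "(1 / fact n) * (of_nat (fact (n - 1)) :: complex) = 1 / of_nat n"
      unfolding fe using gen[OF A0 B0] m by simp
    then show ?thesis by (simp add: mult.assoc[symmetric])
  qed
  also have "\<dots> = (Em n * ((1 / of_nat n) \<cdot>\<^sub>m Jm n s)) $$ (x, a)"
  proof -
    have row: "Em n $$ (x, c) = (if c = hamming_weight n x then 1 else 0)" if "c < n + 1" for c
      using that x by (auto simp: Em_def)
    have "(Em n * ((1 / of_nat n) \<cdot>\<^sub>m Jm n s)) $$ (x, a) = 1 * ((1 / of_nat n) \<cdot>\<^sub>m Jm n s) $$ (hamming_weight n x, a)"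
      using mult_single_r[OF Em_carrier smult_carrier_mat[OF Jm_carrier] x a row] hw_le[of n x] by simp
    then show ?thesis using hw_le[of n x] a by simp
  qed
  finally show "(Sym n (pauli n (single j s)) * Em n) $$ (x, a) = (Em n * ((1 / of_nat n) \<cdot>\<^sub>m Jm n s)) $$ (x, a)" .
qed

lemma lin_J: "lin n w A \<Longrightarrow> lin n (Suc w) (Jm n s * A)"
proof -
  assume A: "lin n w A"
  have Ac: "A \<in> carrier_mat (n + 1) (n + 1)" using lin_carrier[OF A] .
  show ?thesis
  proof (cases "s = 1")
    case True
    have "Jm n s * A = Lm n * A + Rm n * A" unfolding Jm_def using True Ac
      by (simp add: add_mult_distrib_mat[of _ "n + 1" "n + 1"])
    then show ?thesis using lin_L[OF A] lin_R[OF A] by (simp add: lin.add)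
  next
    case False
    show ?thesis
    proof (cases "s = 2")
      case True
      have "Jm n s * A = \<i> \<cdot>\<^sub>m (Lm n * A) + (- \<i>) \<cdot>\<^sub>m (Rm n * A)" unfolding Jm_def using True Ac
        by (simp add: add_mult_distrib_mat[of _ "n + 1" "n + 1"] mult_smult_assoc_mat[of _ "n + 1" "n + 1"])
      then show ?thesis using lin_L[OF A] lin_R[OF A] by (simp add: lin.add lin.smult)
    next
      case False2: False
      have "Jm n s * A = of_nat n \<cdot>\<^sub>m A + (- 2) \<cdot>\<^sub>m (Nm n * A)" unfolding Jm_def using False False2 Ac
        by (simp add: add_mult_distrib_mat[of _ "n + 1" "n + 1"] mult_smult_assoc_mat[of _ "n + 1" "n + 1"])
      moreover have "lin n (Suc w) A" using lin_mono[OF A] by simp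
      ultimately show ?thesis using lin_N[OF A] by (simp add: lin.add lin.smult)
    qed
  qed
qed

lemma Sym_carrier[simp]: "Sym n A \<in> carrier_mat (2 ^ n) (2 ^ n)" by (simp add: Sym_def)

lemma foldr_Em:
  assumes "\<forall>i\<in>set L. i < n \<and> p i \<in> {1, 2, 3}"
  shows "\<exists>M. foldr (\<lambda>i M. Sym n (pauli n (single i (p i))) * M) L (1\<^sub>m (2 ^ n)) * Em n = Em n * M
    \<and> lin n (length L) M \<and> foldr (\<lambda>i M. Sym n (pauli n (single i (p i))) * M) L (1\<^sub>m (2 ^ n)) \<in> carrier_mat (2 ^ n) (2 ^ n)"
  using assms
proof (induction L)
  case Nil
  have "1\<^sub>m (2 ^ n) * Em n = Em n * 1\<^sub>m (n + 1)" by (metis Em_carrier left_mult_one_mat right_mult_one_mat)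
  then show ?case using lin_one[of n] by (intro exI[of _ "1\<^sub>m (n + 1)"]) simp
next
  case (Cons i L)
  define R where "R = foldr (\<lambda>i M. Sym n (pauli n (single i (p i))) * M) L (1\<^sub>m (2 ^ n))"
  obtain M where M: "R * Em n = Em n * M" "lin n (length L) M" "R \<in> carrier_mat (2 ^ n) (2 ^ n)"
    using Cons unfolding R_def by auto
  have i: "i < n" "p i \<in> {1, 2, 3}" using Cons.prems by auto
  have Mc: "M \<in> carrier_mat (n + 1) (n + 1)" using lin_carrier[OF M(2)] .
  define M' where "M' = (1 / of_nat n) \<cdot>\<^sub>m (Jm n (p i) * M)"
  have "(Sym n (pauli n (single i (p i))) * R) * Em n = Sym n (pauli n (single i (p i))) * (R * Em n)"
    by (rule assoc_mult_mat[OF Sym_carrier M(3) Em_carrier])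
  also have "\<dots> = (Sym n (pauli n (single i (p i))) * Em n) * M"
    unfolding M(1) by (rule assoc_mult_mat[OF Sym_carrier Em_carrier Mc, symmetric])
  also have "\<dots> = Em n * ((1 / of_nat n) \<cdot>\<^sub>m Jm n (p i)) * M" unfolding Sym_single_Em[OF i] ..
  also have "\<dots> = Em n * (((1 / of_nat n) \<cdot>\<^sub>m Jm n (p i)) * M)"
    by (rule assoc_mult_mat[OF Em_carrier smult_carrier_mat[OF Jm_carrier] Mc])
  also have "\<dots> = Em n * M'" unfolding M'_def
    by (simp only: mult_smult_assoc_mat[OF Jm_carrier Mc])
  finally have e: "foldr (\<lambda>i M. Sym n (pauli n (single i (p i))) * M) (i # L) (1\<^sub>m (2 ^ n)) * Em n = Em n * M'"
    unfolding R_def by simp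
  have "lin n (length (i # L)) M'" unfolding M'_def using lin_J[OF M(2)] by (simp add: lin.smult)
  moreover have "foldr (\<lambda>i M. Sym n (pauli n (single i (p i))) * M) (i # L) (1\<^sub>m (2 ^ n)) = Sym n (pauli n (single i (p i))) * R"
    unfolding R_def by simp
  then have "foldr (\<lambda>i M. Sym n (pauli n (single i (p i))) * M) (i # L) (1\<^sub>m (2 ^ n)) \<in> carrier_mat (2 ^ n) (2 ^ n)"
    using mult_carrier_mat[OF Sym_carrier M(3)] by simp
  ultimately show ?case using e by blast
qed

section \<open>Dicke conjugation\<close>

lemma dicke_carrier[simp]: "dicke_map n \<in> carrier_mat (2 ^ n) (n + 1)"
  by (simp add: dicke_map_def)

lemma dicke_entry: "x < 2 ^ n \<Longrightarrow> a < n + 1 \<Longrightarrow> dicke_map n $$ (x, a) =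
  (if hamming_weight n x = a then complex_of_real (1 / sqrt (real (n choose a))) else 0)"
  by (simp add: dicke_map_def dicke_vec_def)

definition Dg :: "nat \<Rightarrow> complex mat" where
  "Dg n = mat (n + 1) (n + 1) (\<lambda>(b, a). if b = a then complex_of_real (1 / sqrt (real (n choose a))) else 0)"

definition Sq :: "nat \<Rightarrow> complex mat" where
  "Sq n = mat (n + 1) (n + 1) (\<lambda>(b, a). if b = a then complex_of_real (sqrt (real (n choose a))) else 0)"

lemma Dg_carrier[simp]: "Dg n \<in> carrier_mat (n + 1) (n + 1)" by (simp add: Dg_def)
lemma Dg_dims[simp]: "dim_row (Dg n) = n + 1" "dim_col (Dg n) = n + 1" by (simp_all add: Dg_def)
lemma Sq_dims[simp]: "dim_row (Sq n) = n + 1" "dim_col (Sq n) = n + 1" by (simp_all add: Sq_def)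
lemma Sq_carrier[simp]: "Sq n \<in> carrier_mat (n + 1) (n + 1)" by (simp add: Sq_def)

lemma D_eq: "dicke_map n = Em n * Dg n"
proof (rule eq_matI)
  fix x a assume "x < dim_row (Em n * Dg n)" "a < dim_col (Em n * Dg n)"
  then have x: "x < 2 ^ n" and a: "a < n + 1" by (simp_all add: Em_def Dg_def)
  have col: "Dg n $$ (c, a) = (if c = a then complex_of_real (1 / sqrt (real (n choose a))) else 0)" if "c < n + 1" for c
    using that a by (simp add: Dg_def)
  have e: "(Em n * Dg n) $$ (x, a) = (if a < n + 1 then Em n $$ (x, a) * complex_of_real (1 / sqrt (real (n choose a))) else 0)"
    by (rule mult_single_c[OF Em_carrier Dg_carrier x a col])
  show "dicke_map n $$ (x, a) = (Em n * Dg n) $$ (x, a)"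
    unfolding e dicke_entry[OF x a] using x a by (simp add: Em_def)
qed (simp_all add: dicke_map_def Em_def Dg_def)

lemma adjD_Em: "mat_adjoint (dicke_map n) * Em n = Sq n"
proof (rule eq_matI)
  fix b c assume "b < dim_row (Sq n)" "c < dim_col (Sq n)"
  then have b: "b < n + 1" and c: "c < n + 1" by (simp_all add: Sq_def)
  have "(mat_adjoint (dicke_map n) * Em n) $$ (b, c) =
      (\<Sum>x\<in>{0..<2 ^ n}. mat_adjoint (dicke_map n) $$ (b, x) * Em n $$ (x, c))"
    using b c adjoint_carrier[OF dicke_carrier[of n]] by (simp add: scalar_prod_def Em_def)
  also have "\<dots> = (\<Sum>x\<in>{0..<2 ^ n}. if hamming_weight n x = b then
      (if b = c then complex_of_real (1 / sqrt (real (n choose b))) else 0) else 0)"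
  proof (rule sum.cong)
    fix x :: nat assume "x \<in> {0..<2 ^ n}"
    then have x: "x < 2 ^ n" by simp
    have "mat_adjoint (dicke_map n) $$ (b, x) = cnj (dicke_map n $$ (x, b))"
      using adjoint_index[of b "dicke_map n" x] b x by (simp add: dicke_map_def)
    then show "mat_adjoint (dicke_map n) $$ (b, x) * Em n $$ (x, c) = (if hamming_weight n x = b then
      (if b = c then complex_of_real (1 / sqrt (real (n choose b))) else 0) else 0)"
      using x b c by (simp add: dicke_entry Em_def)
  qed simp
  also have "\<dots> = (\<Sum>x\<in>{x \<in> {0..<2 ^ n}. hamming_weight n x = b}.
      (if b = c then complex_of_real (1 / sqrt (real (n choose b))) else 0))"
    by (rule sum.inter_filter[symmetric]) simp
  also have "\<dots> = of_nat (card {x \<in> {0..<2 ^ n}. hamming_weight n x = b}) *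
      (if b = c then complex_of_real (1 / sqrt (real (n choose b))) else 0)"
    by (rule sum_constant)
  also have "{x \<in> {0..<2 ^ n}. hamming_weight n x = b} = {x. x < 2 ^ n \<and> hamming_weight n x = b}" by auto
  also have "of_nat (card {x. x < 2 ^ n \<and> hamming_weight n x = b}) *
      (if b = c then complex_of_real (1 / sqrt (real (n choose b))) else 0) = Sq n $$ (b, c)"
  proof -
    have pos: "real (n choose b) > 0" using b by simp
    have "real (n choose b) * (1 / sqrt (real (n choose b))) = real (n choose b) / sqrt (real (n choose b))"
      by simp
    also have "\<dots> = sqrt (real (n choose b))" by (rule real_div_sqrt) (use pos in simp)
    finally have r: "real (n choose b) * (1 / sqrt (real (n choose b))) = sqrt (real (n choose b))" .
    have "complex_of_nat (n choose b) * complex_of_real (1 / sqrt (real (n choose b))) =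
        complex_of_real (real (n choose b) * (1 / sqrt (real (n choose b))))"
      by (simp only: of_real_mult of_real_of_nat_eq)
    then have cc: "complex_of_nat (n choose b) * complex_of_real (1 / sqrt (real (n choose b))) =
        complex_of_real (sqrt (real (n choose b)))" unfolding r .
    show ?thesis
    proof (cases "b = c")
      case True then show ?thesis using cc b c card_hw[of n b] by (simp add: Sq_def)
    next
      case False then show ?thesis using b c card_hw[of n b] by (simp add: Sq_def)
    qed
  qed
  finally show "(mat_adjoint (dicke_map n) * Em n) $$ (b, c) = Sq n $$ (b, c)" .
qed (simp_all add: Sq_def dicke_map_def mat_adjoint_def)

lemma dicke_conj:
  assumes S: "S \<in> carrier_mat (2 ^ n) (2 ^ n)" and SE: "S * Em n = Em n * M" and M: "M \<in> carrier_mat (n + 1) (n + 1)"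
  shows "mat_adjoint (dicke_map n) * S * dicke_map n = scl n M"
proof -
  have A: "mat_adjoint (dicke_map n) \<in> carrier_mat (n + 1) (2 ^ n)" by (rule adjoint_carrier[OF dicke_carrier])
  have MD: "M * Dg n \<in> carrier_mat (n + 1) (n + 1)" by (rule mult_carrier_mat[OF M Dg_carrier])
  have "mat_adjoint (dicke_map n) * S * dicke_map n = mat_adjoint (dicke_map n) * (S * dicke_map n)"
    by (rule assoc_mult_mat[OF A S dicke_carrier])
  also have "S * dicke_map n = S * (Em n * Dg n)" using D_eq by simp
  also have "\<dots> = (S * Em n) * Dg n" by (rule assoc_mult_mat[OF S Em_carrier Dg_carrier, symmetric])
  also have "\<dots> = Em n * (M * Dg n)" unfolding SE by (rule assoc_mult_mat[OF Em_carrier M Dg_carrier])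
  also have "mat_adjoint (dicke_map n) * (Em n * (M * Dg n)) = (mat_adjoint (dicke_map n) * Em n) * (M * Dg n)"
    by (rule assoc_mult_mat[OF A Em_carrier MD, symmetric])
  also have "\<dots> = Sq n * (M * Dg n)" unfolding adjD_Em ..
  also have "\<dots> = scl n M"
  proof (rule eq_matI)
    fix b a assume "b < dim_row (scl n M)" "a < dim_col (scl n M)"
    then have b: "b < n + 1" and a: "a < n + 1" by (simp_all add: scl_def)
    have row: "Sq n $$ (b, c) = (if c = b then complex_of_real (sqrt (real (n choose b))) else 0)" if "c < n + 1" for c
      using that b by (auto simp: Sq_def)
    have col: "Dg n $$ (c, a) = (if c = a then complex_of_real (1 / sqrt (real (n choose a))) else 0)" if "c < n + 1" for c
      using that a by (simp add: Dg_def)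
    have "(Sq n * (M * Dg n)) $$ (b, a) = complex_of_real (sqrt (real (n choose b))) * (M * Dg n) $$ (b, a)"
      using mult_single_r[OF Sq_carrier MD b a row] b by simp
    also have "(M * Dg n) $$ (b, a) = M $$ (b, a) * complex_of_real (1 / sqrt (real (n choose a)))"
      using mult_single_c[OF M Dg_carrier b a col] a by simp
    finally show "(Sq n * (M * Dg n)) $$ (b, a) = scl n M $$ (b, a)"
      using a b by (simp add: scl_def of_real_mult[symmetric] of_real_divide)
  qed (simp_all add: Sq_def scl_def)
  finally show ?thesis .
qed

theorem lemmaS7:
  fixes n K d :: nat and C :: "complex vec set" and p :: "nat \<Rightarrow> nat"
  assumes "spin_code n K d C"
    and "is_pauli n p"
    and "pauli_weight n p < d"
  shows "\<exists>c. \<forall>u\<in>C. \<forall>v\<in>C.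
           braket u ((mat_adjoint (dicke_map n) * Sph n p * dicke_map n) *\<^sub>v v) = c * braket u v"
proof -
  have sub: "VectorSpace.subspace class_ring C (module_vec TYPE(complex) (n + 1))"
    and T0: "\<forall>k < d. \<forall>q::int. \<bar>q\<bar> \<le> int k \<longrightarrow>
        (\<exists>c. \<forall>\<phi>\<in>C. \<forall>\<psi>\<in>C. braket \<phi> (sph_tensor n k q *\<^sub>v \<psi>) = c * braket \<phi> \<psi>)"
    using assms(1) unfolding spin_code_def by auto
  have "C \<subseteq> carrier (module_vec TYPE(complex) (n + 1))"
    by (rule LinearCombinations.submodule.subset[OF subspace.submod[OF sub]])
  then have C: "C \<subseteq> carrier_vec (n + 1)" by (simp add: module_vec_simps)
  have T: "KL C (sph_tensor n k q)" if "k < d" "\<bar>q\<bar> \<le> int k" for k q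
    using T0 that unfolding KL_def by blast
  define L where "L = sorted_list_of_set (pauli_support n p)"
  have fin: "finite (pauli_support n p)" unfolding pauli_support_def by simp
  have Lset: "\<forall>i\<in>set L. i < n \<and> p i \<in> {1, 2, 3}"
    using assms(2) fin unfolding L_def pauli_support_def is_pauli_def by auto
  have lenL: "length L = pauli_weight n p" unfolding L_def pauli_weight_def using fin by simp
  have wn: "pauli_weight n p \<le> n" unfolding pauli_weight_def pauli_support_def
    by (rule le_trans[OF card_mono[of "{..<n}"]]) auto
  have Sph_eq: "Sph n p = foldr (\<lambda>i M. Sym n (pauli n (single i (p i))) * M) L (1\<^sub>m (2 ^ n))"
    unfolding Sph_def L_def single_def ..
  obtain M where M: "Sph n p * Em n = Em n * M" "lin n (length L) M" "Sph n p \<in> carrier_mat (2 ^ n) (2 ^ n)"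
    using foldr_Em[OF Lset] unfolding Sph_eq[symmetric] by blast
  have "KL C (scl n M)" using KL_lin[OF C T M(2)] lenL assms(3) wn by simp
  moreover have "mat_adjoint (dicke_map n) * Sph n p * dicke_map n = scl n M"
    by (rule dicke_conj[OF M(3) M(1) lin_carrier[OF M(2)]])
  ultimately show ?thesis unfolding KL_def by simp
qed


end
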